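(* Let $V$ be an operator space which is $\lambda$-subcoexact for some $\lambda<\infty$. If $\boldsymbol{K}$ is a completely compact matrix set in $V$, then $\boldsymbol{K}$ is operator compact.
   Context: Operator spaces are abstract (matrix normed) operator spaces. $\mathcal{T}_n$ denotes the trace class operators on $\mathbb{C}^n$ with the operator space structure of the dual of $M_n$; quotients carry the quotient operator space structure. For finite dimensional operator spaces $X,Y$, $d_{cb}(X,Y)=\inf\{\|\varphi\|_{cb}\|\varphi^{-1}\|_{cb}:\varphi:X\to Y \text{ a complete isomorphism}\}$. A finite dimensional operator space $X$ is $\lambda$-coexact if for every $\varepsilon>0$ there are $n$ and a subspace $W\subseteq\mathcal{T}_n$ with $d_{cb}(X,\mathcal{T}_n/W)<\lambda+\varepsilon$. An operator space $V$ is $\lambda$-subcoexact if every finite dimensional subspace of $V$ is contained in a finite dimensional subspace of $V$ which is $\lambda$-coexact. A matrix set $\boldsymbol{K}=(K_n)$ in $V$ is a sequence of subsets $K_n\subseteq M_n(V)$; closed if each $K_n$ is closed; completely bounded if $\sup\{\|x\|_n:x\in K_n,n\in\mathbb{N}\}<\infty$. $\boldsymbol{K}$ is completely compact if it is closed, completely bounded, and for every $\varepsilon>0$ there is a finite dimensional subspace $V_\varepsilon\subseteq V$ such that every $x\in K_n$ (any $n$) lies within distance $<\varepsilon$ of $M_n(V_\varepsilon)$. $\mathcal{K}$ denotes the compact operators on $\ell^2$, $\mathcal{K}(V)=\mathcal{K}\check{\otimes}V$ (operator-space minimal tensor product, the completion of $M_\infty(V)$, finitely supported infinite matrices over $V$).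 $\mathcal{T}$ is the trace class on $\ell^2$ as the operator space dual of $\mathcal{K}$, $M_k(\mathcal{T})\cong\mathcal{CB}(\mathcal{K},M_k)$ with norm $\|\cdot\|_{\mathcal{T}}$, $M_\infty\subseteq\mathcal{T}$, and $(\sigma\otimes\mathrm{id})(x)\in M_k(V)$ is the slice map for $\sigma\in M_k(\mathcal{T})$, $x\in\mathcal{K}(V)$. The absolutely matrix convex hull of $x\in\mathcal{K}(V)$ has $k$-th level $\{(\sigma\otimes\mathrm{id})(x):\sigma\in M_k(M_\infty),\|\sigma\|_{\mathcal{T}}\le1\}$. $\boldsymbol{K}$ is operator compact if it is closed and there is $x\in\mathcal{K}(V)$ with each $K_k$ contained in the closure of the $k$-th level of the absolutely matrix convex hull of $x$. *)

theory Defs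
  imports Complex_Main
begin

text \<open>A matrix is a function nat => nat => _; only a finite corner is relevant.
  cmat_norm m n A is the operator norm of the m x n complex matrix A acting
  from l2^n to l2^m.\<close>

definition cmat_norm :: "nat \<Rightarrow> nat \<Rightarrow> (nat \<Rightarrow> nat \<Rightarrow> complex) \<Rightarrow> real" where
  "cmat_norm m n A = Sup {sqrt (\<Sum>i<m. (cmod (\<Sum>j<n. A i j * x j))\<^sup>2) | x.
        (\<Sum>j<n. (cmod (x j))\<^sup>2) \<le> 1}"

definition mat_sp :: "nat \<Rightarrow> (nat \<Rightarrow> nat \<Rightarrow> 'v::zero) set" where
  "mat_sp n = {x. \<forall>i j. (n \<le> i \<or> n \<le> j) \<longrightarrow> x i j = 0}"

definition dsum :: "nat \<Rightarrow> nat \<Rightarrow> (nat \<Rightarrow> nat \<Rightarrow> 'v::zero) \<Rightarrow> (nat \<Rightarrow> nat \<Rightarrow> 'v) \<Rightarrow> nat \<Rightarrow> nat \<Rightarrow> 'v" where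
  "dsum n m x y = (\<lambda>i j. if i < n \<and> j < n then x i j
       else if n \<le> i \<and> n \<le> j \<and> i < n + m \<and> j < n + m then y (i - n) (j - n) else 0)"

definition mat_mult3 :: "(complex \<Rightarrow> 'v \<Rightarrow> 'v::ab_group_add) \<Rightarrow> nat \<Rightarrow> nat \<Rightarrow>
    (nat \<Rightarrow> nat \<Rightarrow> complex) \<Rightarrow> (nat \<Rightarrow> nat \<Rightarrow> 'v) \<Rightarrow> (nat \<Rightarrow> nat \<Rightarrow> complex) \<Rightarrow> nat \<Rightarrow> nat \<Rightarrow> 'v" where
  "mat_mult3 sc m n \<alpha> x \<beta> = (\<lambda>i j. if i < m \<and> j < m then
       (\<Sum>p<n. \<Sum>q<n. sc (\<alpha> i p * \<beta> q j) (x p q)) else 0)"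

text \<open>An (abstract) operator space: a complex vector space (scalar multiplication sc)
  with norms mn n on each M_n(V) satisfying Ruan's axioms.\<close>
definition operator_space :: "(complex \<Rightarrow> 'v \<Rightarrow> 'v::ab_group_add) \<Rightarrow> (nat \<Rightarrow> (nat \<Rightarrow> nat \<Rightarrow> 'v) \<Rightarrow> real) \<Rightarrow> bool" where
  "operator_space sc mn \<longleftrightarrow>
     vector_space sc \<and>
     (\<forall>n. \<forall>x\<in>mat_sp n. 0 \<le> mn n x \<and> (mn n x = 0 \<longrightarrow> x = (\<lambda>i j. 0))) \<and>
     (\<forall>n. \<forall>x\<in>mat_sp n. \<forall>y\<in>mat_sp n. mn n (\<lambda>i j. x i j + y i j) \<le> mn n x + mn n y) \<and>
     (\<forall>n c. \<forall>x\<in>mat_sp n. mn n (\<lambda>i j. sc c (x i j)) = cmod c * mn n x) \<and>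
     (\<forall>n m. \<forall>x\<in>mat_sp n. \<forall>y\<in>mat_sp m. mn (n + m) (dsum n m x y) = max (mn n x) (mn m y)) \<and>
     (\<forall>n m \<alpha> \<beta>. \<forall>x\<in>mat_sp n.
        mn m (mat_mult3 sc m n \<alpha> x \<beta>) \<le> cmat_norm m n \<alpha> * mn n x * cmat_norm n m \<beta>)"

definition fin_dim_subspace :: "(complex \<Rightarrow> 'v \<Rightarrow> 'v::ab_group_add) \<Rightarrow> 'v set \<Rightarrow> bool" where
  "fin_dim_subspace sc X \<longleftrightarrow> module.subspace sc X \<and> (\<exists>B. finite B \<and> X = module.span sc B)"

text \<open>An element sigma of M_k(M_N) (i.e. a k x k matrix of N x N matrices, as a map
  r s p q), identified with the map M_N -> M_k, a |-> [sum_pq sigma r s p q * a p q]_rs.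
  Its l-th amplification acts on a in M_l(M_N) = M_(l*N) (block (u,v) entry (p,q) at
  index (u*N+p, v*N+q)).\<close>
definition ampl :: "nat \<Rightarrow> nat \<Rightarrow> (nat \<Rightarrow> nat \<Rightarrow> nat \<Rightarrow> nat \<Rightarrow> complex) \<Rightarrow>
     (nat \<Rightarrow> nat \<Rightarrow> complex) \<Rightarrow> nat \<Rightarrow> nat \<Rightarrow> complex" where
  "ampl N k \<sigma> a = (\<lambda>i j. \<Sum>p<N. \<Sum>q<N.
       \<sigma> (i mod k) (j mod k) p q * a ((i div k) * N + p) ((j div k) * N + q))"

text \<open>Norm of sigma in M_k(T_N) = CB(M_N, M_k): the completely bounded norm.\<close>
definition tnorm :: "nat \<Rightarrow> nat \<Rightarrow> (nat \<Rightarrow> nat \<Rightarrow> nat \<Rightarrow> nat \<Rightarrow> complex) \<Rightarrow> real" where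
  "tnorm N k \<sigma> = Sup {cmat_norm (l * k) (l * k) (ampl N k \<sigma> a) | l a.
        1 \<le> l \<and> cmat_norm (l * N) (l * N) a \<le> 1}"

definition Tn :: "nat \<Rightarrow> (nat \<Rightarrow> nat \<Rightarrow> complex) set" where
  "Tn n = {t. \<forall>p q. (n \<le> p \<or> n \<le> q) \<longrightarrow> t p q = 0}"

definition csubspace_Tn :: "nat \<Rightarrow> (nat \<Rightarrow> nat \<Rightarrow> complex) set \<Rightarrow> bool" where
  "csubspace_Tn n W \<longleftrightarrow> W \<subseteq> Tn n \<and> (\<lambda>p q. 0) \<in> W \<and>
     (\<forall>s\<in>W. \<forall>t\<in>W. (\<lambda>p q. s p q + t p q) \<in> W) \<and>
     (\<forall>c. \<forall>t\<in>W. (\<lambda>p q. c * t p q) \<in> W)"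

text \<open>Quotient norm on M_m(T_n/W) = M_m(T_n)/M_m(W).\<close>
definition qnorm :: "nat \<Rightarrow> (nat \<Rightarrow> nat \<Rightarrow> complex) set \<Rightarrow> nat \<Rightarrow>
     (nat \<Rightarrow> nat \<Rightarrow> nat \<Rightarrow> nat \<Rightarrow> complex) \<Rightarrow> real" where
  "qnorm n W m \<tau> = Inf {tnorm n m (\<lambda>r s p q. \<tau> r s p q - w r s p q) | w.
        \<forall>r<m. \<forall>s<m. w r s \<in> W}"

text \<open>d_cb(X, T_n/W) < c, written out: there is a linear isomorphism X -> T_n/W
  (given by a linear lift phi : X -> T_n) with ||phi||_cb ||phi^-1||_cb < c.\<close>
definition dcb_Tquot_less :: "(complex \<Rightarrow> 'v \<Rightarrow> 'v::ab_group_add) \<Rightarrow> (nat \<Rightarrow> (nat \<Rightarrow> nat \<Rightarrow> 'v) \<Rightarrow> real) \<Rightarrow>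
     'v set \<Rightarrow> nat \<Rightarrow> (nat \<Rightarrow> nat \<Rightarrow> complex) set \<Rightarrow> real \<Rightarrow> bool" where
  "dcb_Tquot_less sc mn X n W c \<longleftrightarrow>
     (\<exists>\<phi> A B.
        (\<forall>x\<in>X. \<phi> x \<in> Tn n) \<and>
        (\<forall>x\<in>X. \<forall>y\<in>X. \<phi> (x + y) = (\<lambda>p q. \<phi> x p q + \<phi> y p q)) \<and>
        (\<forall>a. \<forall>x\<in>X. \<phi> (sc a x) = (\<lambda>p q. a * \<phi> x p q)) \<and>
        (\<forall>x\<in>X. \<phi> x \<in> W \<longrightarrow> x = 0) \<and>
        (\<forall>t\<in>Tn n. \<exists>x\<in>X. (\<lambda>p q. t p q - \<phi> x p q) \<in> W) \<and>
        A * B < c \<and>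
        (\<forall>m x. 1 \<le> m \<longrightarrow> x \<in> mat_sp m \<longrightarrow> (\<forall>i j. x i j \<in> X) \<longrightarrow>
           qnorm n W m (\<lambda>r s. \<phi> (x r s)) \<le> A * mn m x \<and>
           mn m x \<le> B * qnorm n W m (\<lambda>r s. \<phi> (x r s))))"

definition coexact :: "(complex \<Rightarrow> 'v \<Rightarrow> 'v::ab_group_add) \<Rightarrow> (nat \<Rightarrow> (nat \<Rightarrow> nat \<Rightarrow> 'v) \<Rightarrow> real) \<Rightarrow>
     real \<Rightarrow> 'v set \<Rightarrow> bool" where
  "coexact sc mn lam X \<longleftrightarrow>
     (\<forall>\<epsilon>>0. \<exists>n W. csubspace_Tn n W \<and> dcb_Tquot_less sc mn X n W (lam + \<epsilon>))"

definition subcoexact :: "(complex \<Rightarrow> 'v \<Rightarrow> 'v::ab_group_add) \<Rightarrow> (nat \<Rightarrow> (nat \<Rightarrow> nat \<Rightarrow> 'v) \<Rightarrow> real) \<Rightarrow>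
     real \<Rightarrow> bool" where
  "subcoexact sc mn lam \<longleftrightarrow>
     (\<forall>F. fin_dim_subspace sc F \<longrightarrow>
        (\<exists>G. fin_dim_subspace sc G \<and> F \<subseteq> G \<and> coexact sc mn lam G))"

text \<open>A matrix set K: K n is a subset of M_n(V), n >= 1 (K 0 is ignored).\<close>
definition matrix_set :: "(nat \<Rightarrow> (nat \<Rightarrow> nat \<Rightarrow> 'v::zero) set) \<Rightarrow> bool" where
  "matrix_set K \<longleftrightarrow> (\<forall>n\<ge>1. K n \<subseteq> mat_sp n)"

definition mclosure :: "(nat \<Rightarrow> (nat \<Rightarrow> nat \<Rightarrow> 'v::ab_group_add) \<Rightarrow> real) \<Rightarrow> nat \<Rightarrow>
     (nat \<Rightarrow> nat \<Rightarrow> 'v) set \<Rightarrow> (nat \<Rightarrow> nat \<Rightarrow> 'v) set" where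
  "mclosure mn n S = {y \<in> mat_sp n. \<forall>e>0. \<exists>x\<in>S. mn n (\<lambda>i j. x i j - y i j) < e}"

definition mclosed :: "(nat \<Rightarrow> (nat \<Rightarrow> nat \<Rightarrow> 'v::ab_group_add) \<Rightarrow> real) \<Rightarrow>
     (nat \<Rightarrow> (nat \<Rightarrow> nat \<Rightarrow> 'v) set) \<Rightarrow> bool" where
  "mclosed mn K \<longleftrightarrow> (\<forall>n\<ge>1. mclosure mn n (K n) \<subseteq> K n)"

definition completely_bounded :: "(nat \<Rightarrow> (nat \<Rightarrow> nat \<Rightarrow> 'v::ab_group_add) \<Rightarrow> real) \<Rightarrow>
     (nat \<Rightarrow> (nat \<Rightarrow> nat \<Rightarrow> 'v) set) \<Rightarrow> bool" where
  "completely_bounded mn K \<longleftrightarrow> (\<exists>C. \<forall>n\<ge>1. \<forall>x\<in>K n. mn n x \<le> C)"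

definition completely_compact :: "(complex \<Rightarrow> 'v \<Rightarrow> 'v::ab_group_add) \<Rightarrow>
     (nat \<Rightarrow> (nat \<Rightarrow> nat \<Rightarrow> 'v) \<Rightarrow> real) \<Rightarrow> (nat \<Rightarrow> (nat \<Rightarrow> nat \<Rightarrow> 'v) set) \<Rightarrow> bool" where
  "completely_compact sc mn K \<longleftrightarrow> mclosed mn K \<and> completely_bounded mn K \<and>
     (\<forall>\<epsilon>>0. \<exists>V\<epsilon>. fin_dim_subspace sc V\<epsilon> \<and>
        (\<forall>n\<ge>1. \<forall>x\<in>K n. \<exists>y\<in>mat_sp n. (\<forall>i j. y i j \<in> V\<epsilon>) \<and>
            mn n (\<lambda>i j. x i j - y i j) < \<epsilon>))"

definition trunc :: "nat \<Rightarrow> (nat \<Rightarrow> nat \<Rightarrow> 'v::zero) \<Rightarrow> nat \<Rightarrow> nat \<Rightarrow> 'v" where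
  "trunc N x = (\<lambda>i j. if i < N \<and> j < N then x i j else 0)"

text \<open>K(V), the completion of M_infinity(V), represented by infinite matrices over V
  whose finite truncations form a Cauchy sequence (they then converge to the element).\<close>
definition KV :: "(nat \<Rightarrow> (nat \<Rightarrow> nat \<Rightarrow> 'v::ab_group_add) \<Rightarrow> real) \<Rightarrow> (nat \<Rightarrow> nat \<Rightarrow> 'v) set" where
  "KV mn = {x. \<forall>e>0. \<exists>N0. \<forall>N M. N0 \<le> N \<longrightarrow> N \<le> M \<longrightarrow>
        mn M (\<lambda>i j. trunc M x i j - trunc N x i j) < e}"

text \<open>Slice map (sigma (x) id)(x) in M_k(V), for sigma in M_k(M_N) (supported in N x N).\<close>
definition slice :: "(complex \<Rightarrow> 'v \<Rightarrow> 'v::ab_group_add) \<Rightarrow> nat \<Rightarrow> nat \<Rightarrow>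
     (nat \<Rightarrow> nat \<Rightarrow> nat \<Rightarrow> nat \<Rightarrow> complex) \<Rightarrow> (nat \<Rightarrow> nat \<Rightarrow> 'v) \<Rightarrow> nat \<Rightarrow> nat \<Rightarrow> 'v" where
  "slice sc k N \<sigma> x = (\<lambda>r s. if r < k \<and> s < k then (\<Sum>p<N. \<Sum>q<N. sc (\<sigma> r s p q) (x p q)) else 0)"

text \<open>k-th level of the absolutely matrix convex hull of x:
  slices by sigma in M_k(M_infinity) with ||sigma||_T <= 1.\<close>
definition amc_hull :: "(complex \<Rightarrow> 'v \<Rightarrow> 'v::ab_group_add) \<Rightarrow> nat \<Rightarrow> (nat \<Rightarrow> nat \<Rightarrow> 'v) \<Rightarrow>
     (nat \<Rightarrow> nat \<Rightarrow> 'v) set" where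
  "amc_hull sc k x = {slice sc k N \<sigma> x | N \<sigma>.
      (\<forall>r s p q. r < k \<longrightarrow> s < k \<longrightarrow> (N \<le> p \<or> N \<le> q) \<longrightarrow> \<sigma> r s p q = 0) \<and>
      tnorm N k \<sigma> \<le> 1}"

definition operator_compact :: "(complex \<Rightarrow> 'v \<Rightarrow> 'v::ab_group_add) \<Rightarrow>
     (nat \<Rightarrow> (nat \<Rightarrow> nat \<Rightarrow> 'v) \<Rightarrow> real) \<Rightarrow> (nat \<Rightarrow> (nat \<Rightarrow> nat \<Rightarrow> 'v) set) \<Rightarrow> bool" where
  "operator_compact sc mn K \<longleftrightarrow> mclosed mn K \<and>
     (\<exists>x\<in>KV mn. \<forall>k\<ge>1. K k \<subseteq> mclosure mn k (amc_hull sc k x))"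

end

theory Submission
  imports Defs "HOL-Analysis.L2_Norm"
begin

definition mv :: "nat \<Rightarrow> (nat \<Rightarrow> nat \<Rightarrow> complex) \<Rightarrow> (nat \<Rightarrow> complex) \<Rightarrow> nat \<Rightarrow> complex" where
  "mv n A x = (\<lambda>i. \<Sum>j<n. A i j * x j)"

definition vn :: "nat \<Rightarrow> (nat \<Rightarrow> complex) \<Rightarrow> real" where
  "vn n x = L2_set (\<lambda>j. cmod (x j)) {..<n}"

lemma vn_eq: "vn n x = sqrt (\<Sum>j<n. (cmod (x j))\<^sup>2)"
  by (simp add: vn_def L2_set_def)

lemma cmat_norm_alt: "cmat_norm m n A = Sup {vn m (mv n A x) | x. vn n x \<le> 1}"
  unfolding cmat_norm_def vn_eq mv_def by simp

lemma vn_nonneg: "0 \<le> vn n x" by (simp add: vn_def)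

lemma vn_le1_coord: assumes "vn n x \<le> 1" "j < n" shows "cmod (x j) \<le> 1"
proof -
  have "cmod (x j) \<le> vn n x" unfolding vn_def
    using member_le_L2_set[of "{..<n}" j "\<lambda>j. cmod (x j)"] assms by auto
  thus ?thesis using assms by simp
qed

lemma cm_vec_bound:
  assumes "vn n x \<le> 1"
  shows "vn m (mv n A x) \<le> (\<Sum>i<m. \<Sum>j<n. cmod (A i j))"
proof -
  have "vn m (mv n A x) \<le> L2_set (\<lambda>i. \<Sum>j<n. cmod (A i j)) {..<m}"
    unfolding vn_def
  proof (rule L2_set_mono)
    fix i assume "i \<in> {..<m}"
    have "cmod (mv n A x i) \<le> (\<Sum>j<n. cmod (A i j * x j))"
      unfolding mv_def by (rule norm_sum)
    also have "\<dots> \<le> (\<Sum>j<n. cmod (A i j))"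
    proof (rule sum_mono)
      fix j assume "j \<in> {..<n}"
      then have "cmod (x j) \<le> 1" using vn_le1_coord[OF assms] by auto
      then show "cmod (A i j * x j) \<le> cmod (A i j)"
        by (simp add: norm_mult mult_left_le)
    qed
    finally show "cmod (mv n A x i) \<le> (\<Sum>j<n. cmod (A i j))" .
  qed simp
  also have "\<dots> \<le> (\<Sum>i<m. \<Sum>j<n. cmod (A i j))"
    by (rule L2_set_le_sum) (simp add: sum_nonneg)
  finally show ?thesis .
qed

lemma cm_set_ne: "{vn m (mv n A x) | x. vn n x \<le> 1} \<noteq> {}"
proof -
  have "vn n (\<lambda>_. 0) \<le> 1" by (simp add: vn_def L2_set_def)
  thus ?thesis by blast
qed

lemma cm_bdd: "bdd_above {vn m (mv n A x) | x. vn n x \<le> 1}"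
  unfolding bdd_above_def using cm_vec_bound by blast

lemma cm_upper: "vn n x \<le> 1 \<Longrightarrow> vn m (mv n A x) \<le> cmat_norm m n A"
  unfolding cmat_norm_alt by (rule cSup_upper[OF _ cm_bdd]) blast

lemma cm_least: "(\<And>x. vn n x \<le> 1 \<Longrightarrow> vn m (mv n A x) \<le> c) \<Longrightarrow> cmat_norm m n A \<le> c"
  unfolding cmat_norm_alt by (rule cSup_least[OF cm_set_ne]) blast

lemma cm_nonneg: "0 \<le> cmat_norm m n A"
proof -
  have "vn n (\<lambda>_. 0) \<le> 1" by (simp add: vn_def L2_set_def)
  from cm_upper[OF this, of m A] show ?thesis using vn_nonneg[of m] by (meson order_trans)
qed

lemma cm_triangle: "cmat_norm m n (\<lambda>i j. A i j + B i j) \<le> cmat_norm m n A + cmat_norm m n B"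
proof (rule cm_least)
  fix x assume x: "vn n x \<le> 1"
  have "vn m (mv n (\<lambda>i j. A i j + B i j) x) = L2_set (\<lambda>i. cmod (mv n A x i + mv n B x i)) {..<m}"
    unfolding vn_def mv_def by (simp add: distrib_right sum.distrib)
  also have "\<dots> \<le> L2_set (\<lambda>i. cmod (mv n A x i) + cmod (mv n B x i)) {..<m}"
    by (rule L2_set_mono) (auto simp: norm_triangle_ineq)
  also have "\<dots> \<le> vn m (mv n A x) + vn m (mv n B x)"
    unfolding vn_def by (rule L2_set_triangle_ineq)
  also have "\<dots> \<le> cmat_norm m n A + cmat_norm m n B"
    using cm_upper[OF x] by (simp add: add_mono)
  finally show "vn m (mv n (\<lambda>i j. A i j + B i j) x) \<le> cmat_norm m n A + cmat_norm m n B" .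
qed

lemma cm_scale: "cmat_norm m n (\<lambda>i j. c * A i j) \<le> cmod c * cmat_norm m n A"
proof (rule cm_least)
  fix x assume x: "vn n x \<le> 1"
  have "vn m (mv n (\<lambda>i j. c * A i j) x) = L2_set (\<lambda>i. cmod c * cmod (mv n A x i)) {..<m}"
    unfolding vn_def mv_def
    by (rule L2_set_cong) (auto simp: mult.assoc sum_distrib_left[symmetric] norm_mult)
  also have "\<dots> = cmod c * vn m (mv n A x)"
    unfolding vn_def by (rule L2_set_right_distrib[symmetric]) simp
  also have "\<dots> \<le> cmod c * cmat_norm m n A"
    using cm_upper[OF x] by (simp add: mult_left_mono)
  finally show "vn m (mv n (\<lambda>i j. c * A i j) x) \<le> cmod c * cmat_norm m n A" .
qed

lemma cm_sum:
  assumes "finite S"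
  shows "cmat_norm m n (\<lambda>i j. \<Sum>b\<in>S. F b i j) \<le> (\<Sum>b\<in>S. cmat_norm m n (F b))"
  using assms
proof (induction S rule: finite_induct)
  case empty
  have "cmat_norm m n (\<lambda>i j. 0) \<le> 0"
    by (rule cm_least) (simp add: vn_def mv_def L2_set_def)
  then show ?case by simp
next
  case (insert a S)
  have "cmat_norm m n (\<lambda>i j. \<Sum>b\<in>insert a S. F b i j)
      = cmat_norm m n (\<lambda>i j. F a i j + (\<Sum>b\<in>S. F b i j))"
    using insert by simp
  also have "\<dots> \<le> cmat_norm m n (F a) + cmat_norm m n (\<lambda>i j. \<Sum>b\<in>S. F b i j)"
    by (rule cm_triangle)
  also have "\<dots> \<le> cmat_norm m n (F a) + (\<Sum>b\<in>S. cmat_norm m n (F b))"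
    using insert by simp
  finally show ?case using insert by simp
qed

lemma cm_id: "cmat_norm n n (\<lambda>i j. if i = j then 1 else 0) \<le> 1"
proof (rule cm_least)
  fix x assume "vn n x \<le> 1"
  moreover have "mv n (\<lambda>i j. if i = j then 1 else 0) x i = x i" if "i < n" for i
    using that unfolding mv_def by (simp add: if_distrib[of "\<lambda>c. c * _"] cong: if_cong)
  ultimately show "vn n (mv n (\<lambda>i j. if i = j then 1 else 0) x) \<le> 1"
    unfolding vn_def by (metis (no_types, lifting) L2_set_cong lessThan_iff)
qed

lemma sum_reindex_le:
  fixes h :: "nat \<Rightarrow> real"
  assumes "inj_on f D" "finite D" "f ` D \<subseteq> {..<n}" "\<And>i. 0 \<le> h i"
  shows "(\<Sum>i\<in>D. h (f i)) \<le> (\<Sum>i<n. h i)"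
proof -
  have "(\<Sum>i\<in>D. h (f i)) = (\<Sum>i\<in>f ` D. h i)" using sum.reindex[OF assms(1), of h] by simp
  also have "\<dots> \<le> (\<Sum>i<n. h i)" by (rule sum_mono2) (use assms in auto)
  finally show ?thesis .
qed

lemma cm_reindex:
  assumes fi: "inj_on f {i. i < m \<and> P i}" and fr: "\<And>i. i < m \<Longrightarrow> P i \<Longrightarrow> f i < n"
    and gi: "inj_on g {j. j < m' \<and> Q j}" and gr: "\<And>j. j < m' \<Longrightarrow> Q j \<Longrightarrow> g j < n'"
  shows "cmat_norm m m' (\<lambda>i j. if P i \<and> Q j then a (f i) (g j) else 0) \<le> cmat_norm n n' a"
proof (rule cm_least)
  fix x assume x: "vn m' x \<le> 1"
  define D where "D = {j. j < m' \<and> Q j}"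
  define E where "E = {i. i < m \<and> P i}"
  have finD: "finite D" and finE: "finite E" by (auto simp: D_def E_def)
  define y where "y j' = (if j' \<in> g ` D then x (the_inv_into D g j') else 0)" for j'
  have ygj: "y (g j) = x j" if "j \<in> D" for j
    using that gi unfolding y_def D_def by (auto simp: the_inv_into_f_f)
  have gD: "g ` D \<subseteq> {..<n'}" using gr by (auto simp: D_def)
  have "(\<Sum>j'<n'. (cmod (y j'))\<^sup>2) = (\<Sum>j'\<in>g ` D. (cmod (y j'))\<^sup>2)"
    by (rule sum.mono_neutral_right) (use gD in \<open>auto simp: y_def\<close>)
  also have "\<dots> = (\<Sum>j\<in>D. (cmod (y (g j)))\<^sup>2)"
    using sum.reindex[of g D] gi by (simp add: D_def)
  also have "\<dots> = (\<Sum>j\<in>D. (cmod (x j))\<^sup>2)" using ygj by simp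
  also have "\<dots> \<le> (\<Sum>j<m'. (cmod (x j))\<^sup>2)"
    by (rule sum_mono2) (auto simp: D_def)
  finally have "vn n' y \<le> vn m' x" unfolding vn_eq by simp
  with x have y1: "vn n' y \<le> 1" by simp
  have mvA: "mv m' (\<lambda>i j. if P i \<and> Q j then a (f i) (g j) else 0) x i
        = (if P i then mv n' a y (f i) else 0)" for i
  proof (cases "P i")
    case True
    have "(\<Sum>j<m'. (if P i \<and> Q j then a (f i) (g j) else 0) * x j) = (\<Sum>j\<in>D. a (f i) (g j) * x j)"
      using True by (intro sum.mono_neutral_cong_right) (auto simp: D_def)
    also have "\<dots> = (\<Sum>j\<in>D. a (f i) (g j) * y (g j))" using ygj by simp
    also have "\<dots> = (\<Sum>j'\<in>g ` D. a (f i) j' * y j')"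
      using sum.reindex[of g D "\<lambda>j'. a (f i) j' * y j'"] gi by (simp add: D_def)
    also have "\<dots> = (\<Sum>j'<n'. a (f i) j' * y j')"
      by (rule sum.mono_neutral_left) (use gD in \<open>auto simp: y_def\<close>)
    finally show ?thesis using True by (simp add: mv_def)
  qed (simp add: mv_def)
  have "(\<Sum>i<m. (cmod (mv m' (\<lambda>i j. if P i \<and> Q j then a (f i) (g j) else 0) x i))\<^sup>2)
      = (\<Sum>i\<in>E. (cmod (mv n' a y (f i)))\<^sup>2)"
    unfolding mvA by (intro sum.mono_neutral_cong_right) (auto simp: E_def)
  also have "\<dots> \<le> (\<Sum>i<n. (cmod (mv n' a y i))\<^sup>2)"
    by (rule sum_reindex_le) (use fi fr finE in \<open>auto simp: E_def\<close>)
  finally have "vn m (mv m' (\<lambda>i j. if P i \<and> Q j then a (f i) (g j) else 0) x) \<le> vn n (mv n' a y)"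
    unfolding vn_eq by simp
  also have "\<dots> \<le> cmat_norm n n' a" by (rule cm_upper[OF y1])
  finally show "vn m (mv m' (\<lambda>i j. if P i \<and> Q j then a (f i) (g j) else 0) x) \<le> cmat_norm n n' a" .
qed

lemma cm_zero: "cmat_norm m n (\<lambda>i j. 0) \<le> 0"
  by (rule cm_least) (simp add: vn_def mv_def L2_set_def)

lemma cm_dim0: "cmat_norm 0 n A \<le> 0"
  by (rule cm_least) (simp add: vn_def)

lemma delta2:
  fixes G :: "nat \<Rightarrow> nat \<Rightarrow> 'a::comm_monoid_add"
  assumes "i' < k" "j' < k"
  shows "(\<Sum>r<k. \<Sum>s<k. if i' = r then if j' = s then G r s else 0 else 0) = G i' j'"
proof -
  have "(\<Sum>s<k. if i' = r then if j' = s then G r s else 0 else 0) = (if i' = r then G r j' else 0)" for r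
    using assms by (cases "i' = r") (simp_all add: sum.delta')
  then show ?thesis using assms by (simp add: sum.delta')
qed

lemma ampl_decomp:
  assumes "0 < k"
  shows "ampl N k \<sigma> a = (\<lambda>i j. \<Sum>r<k. \<Sum>s<k. \<Sum>p<N. \<Sum>q<N. \<sigma> r s p q *
      (if i mod k = r \<and> j mod k = s then a ((i div k) * N + p) ((j div k) * N + q) else 0))"
proof (intro ext)
  fix i j
  have im: "i mod k \<in> {..<k}" "j mod k \<in> {..<k}" using assms by auto
  have "(\<Sum>p<N. \<Sum>q<N. \<sigma> r s p q *
      (if i mod k = r \<and> j mod k = s then a ((i div k) * N + p) ((j div k) * N + q) else 0))
    = (if i mod k = r then (if j mod k = s then (\<Sum>p<N. \<Sum>q<N. \<sigma> r s p q *
         a ((i div k) * N + p) ((j div k) * N + q)) else 0) else 0)" for r s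
    by simp
  then have "(\<Sum>r<k. \<Sum>s<k. \<Sum>p<N. \<Sum>q<N. \<sigma> r s p q *
      (if i mod k = r \<and> j mod k = s then a ((i div k) * N + p) ((j div k) * N + q) else 0))
    = (\<Sum>r<k. \<Sum>s<k. if i mod k = r then (if j mod k = s then (\<Sum>p<N. \<Sum>q<N. \<sigma> r s p q *
         a ((i div k) * N + p) ((j div k) * N + q)) else 0) else 0)"
    by simp
  also have "\<dots> = ampl N k \<sigma> a i j"
    using im by (subst delta2) (auto simp add: ampl_def)
  finally show "ampl N k \<sigma> a i j = (\<Sum>r<k. \<Sum>s<k. \<Sum>p<N. \<Sum>q<N. \<sigma> r s p q *
      (if i mod k = r \<and> j mod k = s then a ((i div k) * N + p) ((j div k) * N + q) else 0))" by simp
qed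

lemma block_idx_lt:
  fixes i l k N p :: nat
  assumes "i < l * k" "p < N"
  shows "(i div k) * N + p < l * N"
proof -
  have "i div k < l" using assms(1) by (rule less_mult_imp_div_less)
  then have "i div k + 1 \<le> l" by simp
  then have "(i div k + 1) * N \<le> l * N" by (rule mult_right_mono) simp
  then show ?thesis using assms(2) by (simp add: algebra_simps)
qed

lemma cm_R:
  assumes "0 < k" "p < N" "q < N"
  shows "cmat_norm (l * k) (l * k) (\<lambda>i j. if i mod k = r \<and> j mod k = s
            then a ((i div k) * N + p) ((j div k) * N + q) else 0) \<le> cmat_norm (l * N) (l * N) a"
proof -
  have inj: "inj_on (\<lambda>i. (i div k) * N + p') {i. i < l * k \<and> i mod k = r'}" if "p' < N" for p' r'
  proof (rule inj_onI)
    fix x y assume x: "x \<in> {i. i < l * k \<and> i mod k = r'}" and y: "y \<in> {i. i < l * k \<and> i mod k = r'}"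
      and e: "x div k * N + p' = y div k * N + p'"
    have "N > 0" using that by simp
    then have d: "x div k = y div k" using e by simp
    have "x mod k = y mod k" using x y by simp
    then show "x = y" using d by (metis div_mult_mod_eq)
  qed
  show ?thesis
  proof (rule cm_reindex[where f="\<lambda>i. (i div k) * N + p" and g="\<lambda>i. (i div k) * N + q"])
    show "inj_on (\<lambda>i. i div k * N + p) {i. i < l * k \<and> i mod k = r}" by (rule inj) (rule assms)
    show "inj_on (\<lambda>i. i div k * N + q) {i. i < l * k \<and> i mod k = s}" by (rule inj) (rule assms)
    show "i div k * N + p < l * N" if "i < l * k" for i by (rule block_idx_lt[OF that assms(2)])
    show "i div k * N + q < l * N" if "i < l * k" for i by (rule block_idx_lt[OF that assms(3)])
  qed
qed

definition sabs :: "nat \<Rightarrow> nat \<Rightarrow> (nat \<Rightarrow> nat \<Rightarrow> nat \<Rightarrow> nat \<Rightarrow> complex) \<Rightarrow> real" where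
  "sabs N k \<sigma> = (\<Sum>r<k. \<Sum>s<k. \<Sum>p<N. \<Sum>q<N. cmod (\<sigma> r s p q))"

lemma sabs_nonneg: "0 \<le> sabs N k \<sigma>"
  by (simp add: sabs_def sum_nonneg)

lemma cm_ampl: "cmat_norm (l * k) (l * k) (ampl N k \<sigma> a) \<le> sabs N k \<sigma> * cmat_norm (l * N) (l * N) a"
proof (cases "k = 0")
  case True
  then show ?thesis using cm_dim0[of "l * k"] by (simp add: sabs_def)
next
  case False
  then have k: "0 < k" by simp
  define R where "R r s p q = (\<lambda>i j. if i mod k = r \<and> j mod k = s
            then a ((i div k) * N + p) ((j div k) * N + q) else 0)" for r s p q
  let ?c = "cmat_norm (l * k) (l * k)"
  have "?c (ampl N k \<sigma> a) = ?c (\<lambda>i j. \<Sum>r<k. \<Sum>s<k. \<Sum>p<N. \<Sum>q<N. \<sigma> r s p q * R r s p q i j)"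
    unfolding ampl_decomp[OF k] R_def ..
  also have "\<dots> \<le> (\<Sum>r<k. ?c (\<lambda>i j. \<Sum>s<k. \<Sum>p<N. \<Sum>q<N. \<sigma> r s p q * R r s p q i j))"
    by (rule cm_sum) simp
  also have "\<dots> \<le> (\<Sum>r<k. \<Sum>s<k. ?c (\<lambda>i j. \<Sum>p<N. \<Sum>q<N. \<sigma> r s p q * R r s p q i j))"
    by (intro sum_mono cm_sum) simp
  also have "\<dots> \<le> (\<Sum>r<k. \<Sum>s<k. \<Sum>p<N. ?c (\<lambda>i j. \<Sum>q<N. \<sigma> r s p q * R r s p q i j))"
    by (intro sum_mono cm_sum) simp
  also have "\<dots> \<le> (\<Sum>r<k. \<Sum>s<k. \<Sum>p<N. \<Sum>q<N. ?c (\<lambda>i j. \<sigma> r s p q * R r s p q i j))"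
    by (intro sum_mono cm_sum) simp
  also have "\<dots> \<le> (\<Sum>r<k. \<Sum>s<k. \<Sum>p<N. \<Sum>q<N. cmod (\<sigma> r s p q) * cmat_norm (l * N) (l * N) a)"
  proof (intro sum_mono)
    fix r s p q assume "p \<in> {..<N}" "q \<in> {..<N}"
    have "?c (\<lambda>i j. \<sigma> r s p q * R r s p q i j) \<le> cmod (\<sigma> r s p q) * ?c (R r s p q)"
      by (rule cm_scale)
    also have "\<dots> \<le> cmod (\<sigma> r s p q) * cmat_norm (l * N) (l * N) a"
      unfolding R_def by (intro mult_left_mono cm_R) (use k \<open>p \<in> _\<close> \<open>q \<in> _\<close> in auto)
    finally show "?c (\<lambda>i j. \<sigma> r s p q * R r s p q i j) \<le> cmod (\<sigma> r s p q) * cmat_norm (l * N) (l * N) a" .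
  qed
  also have "\<dots> = sabs N k \<sigma> * cmat_norm (l * N) (l * N) a"
    by (simp add: sabs_def sum_distrib_right)
  finally show ?thesis .
qed

definition tset :: "nat \<Rightarrow> nat \<Rightarrow> (nat \<Rightarrow> nat \<Rightarrow> nat \<Rightarrow> nat \<Rightarrow> complex) \<Rightarrow> real set" where
  "tset N k \<sigma> = {cmat_norm (l * k) (l * k) (ampl N k \<sigma> a) | l a.
        1 \<le> l \<and> cmat_norm (l * N) (l * N) a \<le> 1}"

lemma tnorm_tset: "tnorm N k \<sigma> = Sup (tset N k \<sigma>)"
  by (simp add: tnorm_def tset_def)

lemma tset_ne: "tset N k \<sigma> \<noteq> {}"
proof -
  have "cmat_norm (1 * N) (1 * N) (\<lambda>i j. 0) \<le> 1" using cm_zero[of "1*N" "1*N"] by simp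
  then show ?thesis unfolding tset_def by blast
qed

lemma tset_bdd: "bdd_above (tset N k \<sigma>)"
proof -
  have "x \<le> sabs N k \<sigma>" if "x \<in> tset N k \<sigma>" for x
  proof -
    obtain l a where x: "x = cmat_norm (l * k) (l * k) (ampl N k \<sigma> a)" and a: "cmat_norm (l * N) (l * N) a \<le> 1"
      using \<open>x \<in> tset N k \<sigma>\<close> unfolding tset_def by blast
    have "x \<le> sabs N k \<sigma> * cmat_norm (l * N) (l * N) a" using x cm_ampl by simp
    also have "\<dots> \<le> sabs N k \<sigma> * 1" by (rule mult_left_mono[OF a sabs_nonneg])
    finally show ?thesis by simp
  qed
  then show ?thesis unfolding bdd_above_def by blast
qed

lemma tnorm_upper: "1 \<le> l \<Longrightarrow> cmat_norm (l * N) (l * N) a \<le> 1 \<Longrightarrow>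
    cmat_norm (l * k) (l * k) (ampl N k \<sigma> a) \<le> tnorm N k \<sigma>"
  unfolding tnorm_tset by (rule cSup_upper[OF _ tset_bdd]) (auto simp: tset_def)

lemma tnorm_least: "(\<And>l a. 1 \<le> l \<Longrightarrow> cmat_norm (l * N) (l * N) a \<le> 1 \<Longrightarrow>
    cmat_norm (l * k) (l * k) (ampl N k \<sigma> a) \<le> c) \<Longrightarrow> tnorm N k \<sigma> \<le> c"
  unfolding tnorm_tset by (rule cSup_least[OF tset_ne]) (auto simp: tset_def)

lemma tnorm_nonneg: "0 \<le> tnorm N k \<sigma>"
proof -
  have "cmat_norm (1 * N) (1 * N) (\<lambda>i j. 0) \<le> 1" using cm_zero[of "1*N" "1*N"] by simp
  from tnorm_upper[OF _ this, of k \<sigma>] show ?thesis using cm_nonneg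
    by (meson order_trans order_refl)
qed

lemma ampl_add: "ampl N k (\<lambda>r s p q. \<sigma>1 r s p q + \<sigma>2 r s p q) a = (\<lambda>i j. ampl N k \<sigma>1 a i j + ampl N k \<sigma>2 a i j)"
  by (simp add: ampl_def distrib_right sum.distrib)

lemma ampl_scale: "ampl N k (\<lambda>r s p q. c * \<sigma> r s p q) a = (\<lambda>i j. c * ampl N k \<sigma> a i j)"
  by (simp add: ampl_def sum_distrib_left mult.assoc)

lemma ampl_zero: "ampl N k (\<lambda>r s p q. 0) a = (\<lambda>i j. 0)"
  by (simp add: ampl_def)

lemma tnorm_triangle: "tnorm N k (\<lambda>r s p q. \<sigma>1 r s p q + \<sigma>2 r s p q) \<le> tnorm N k \<sigma>1 + tnorm N k \<sigma>2"
proof (rule tnorm_least)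
  fix l a assume l: "1 \<le> l" and a: "cmat_norm (l * N) (l * N) a \<le> 1"
  have "cmat_norm (l * k) (l * k) (ampl N k (\<lambda>r s p q. \<sigma>1 r s p q + \<sigma>2 r s p q) a)
     \<le> cmat_norm (l * k) (l * k) (ampl N k \<sigma>1 a) + cmat_norm (l * k) (l * k) (ampl N k \<sigma>2 a)"
    unfolding ampl_add by (rule cm_triangle)
  also have "\<dots> \<le> tnorm N k \<sigma>1 + tnorm N k \<sigma>2"
    using tnorm_upper[OF l a] by (simp add: add_mono)
  finally show "cmat_norm (l * k) (l * k) (ampl N k (\<lambda>r s p q. \<sigma>1 r s p q + \<sigma>2 r s p q) a) \<le> tnorm N k \<sigma>1 + tnorm N k \<sigma>2" .
qed

lemma tnorm_scale: "tnorm N k (\<lambda>r s p q. c * \<sigma> r s p q) \<le> cmod c * tnorm N k \<sigma>"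
proof (rule tnorm_least)
  fix l a assume l: "1 \<le> l" and a: "cmat_norm (l * N) (l * N) a \<le> 1"
  have "cmat_norm (l * k) (l * k) (ampl N k (\<lambda>r s p q. c * \<sigma> r s p q) a)
     \<le> cmod c * cmat_norm (l * k) (l * k) (ampl N k \<sigma> a)"
    unfolding ampl_scale by (rule cm_scale)
  also have "\<dots> \<le> cmod c * tnorm N k \<sigma>"
    using tnorm_upper[OF l a] by (simp add: mult_left_mono)
  finally show "cmat_norm (l * k) (l * k) (ampl N k (\<lambda>r s p q. c * \<sigma> r s p q) a) \<le> cmod c * tnorm N k \<sigma>" .
qed

lemma tnorm_zero: "tnorm N k (\<lambda>r s p q. 0) \<le> 0"
  by (rule tnorm_least) (simp add: ampl_zero cm_zero)

lemma tnorm_sum: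
  assumes "finite S"
  shows "tnorm N k (\<lambda>r s p q. \<Sum>b\<in>S. F b r s p q) \<le> (\<Sum>b\<in>S. tnorm N k (F b))"
  using assms
proof (induction S rule: finite_induct)
  case empty
  then show ?case using tnorm_zero by simp
next
  case (insert x S)
  have "tnorm N k (\<lambda>r s p q. \<Sum>b\<in>insert x S. F b r s p q)
      = tnorm N k (\<lambda>r s p q. F x r s p q + (\<Sum>b\<in>S. F b r s p q))"
    using insert by simp
  also have "\<dots> \<le> tnorm N k (F x) + tnorm N k (\<lambda>r s p q. \<Sum>b\<in>S. F b r s p q)"
    by (rule tnorm_triangle)
  finally show ?case using insert by simp
qed

lemma tnorm_canon:
  assumes n: "1 \<le> n"
    and \<sigma>: "\<And>r s p q. r < n \<Longrightarrow> s < n \<Longrightarrow> p < n \<Longrightarrow> q < n \<Longrightarrow> \<sigma> r s p q = (if r = p \<and> s = q then 1 else 0)"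
  shows "tnorm n n \<sigma> \<le> 1"
proof (rule tnorm_least)
  fix l a assume "1 \<le> l" and a: "cmat_norm (l * n) (l * n) a \<le> 1"
  have "ampl n n \<sigma> a = a"
  proof (intro ext)
    fix i j
    have im: "i mod n < n" "j mod n < n" using n by auto
    have "ampl n n \<sigma> a i j = (\<Sum>p<n. \<Sum>q<n. (if i mod n = p \<and> j mod n = q then 1 else 0) *
           a (i div n * n + p) (j div n * n + q))"
      unfolding ampl_def by (intro sum.cong refl) (simp add: \<sigma> im)
    also have "\<dots> = (\<Sum>p<n. \<Sum>q<n. if i mod n = p then if j mod n = q then
           a (i div n * n + p) (j div n * n + q) else 0 else 0)"
      by (intro sum.cong refl) auto
    also have "\<dots> = a (i div n * n + i mod n) (j div n * n + j mod n)"
      using im by (rule delta2)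
    also have "\<dots> = a i j" by simp
    finally show "ampl n n \<sigma> a i j = a i j" .
  qed
  then show "cmat_norm (l * n) (l * n) (ampl n n \<sigma> a) \<le> 1" using a by simp
qed

lemma shift_sum:
  fixes F :: "nat \<Rightarrow> 'a::comm_monoid_add"
  assumes "o' + N \<le> N'"
  shows "(\<Sum>p<N'. if o' \<le> p \<and> p < o' + N then F (p - o') else 0) = (\<Sum>p<N. F p)"
proof -
  have "(\<Sum>p<N'. if o' \<le> p \<and> p < o' + N then F (p - o') else 0) = (\<Sum>p\<in>{o'..<o'+N}. F (p - o'))"
    using assms by (intro sum.mono_neutral_cong_right) auto
  also have "\<dots> = (\<Sum>p\<in>(\<lambda>p. p + o') ` {..<N}. F (p - o'))"
  proof -
    have "{o'..<o'+N} = (\<lambda>p. p + o') ` {..<N}"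
      by (simp add: image_add_atLeastLessThan lessThan_atLeast0 add.commute)
    then show ?thesis by simp
  qed
  also have "\<dots> = (\<Sum>p<N. F p)"
    by (subst sum.reindex) (auto simp: inj_on_def)
  finally show ?thesis .
qed

definition tshift :: "nat \<Rightarrow> nat \<Rightarrow> (nat \<Rightarrow> nat \<Rightarrow> nat \<Rightarrow> nat \<Rightarrow> complex) \<Rightarrow> nat \<Rightarrow> nat \<Rightarrow> nat \<Rightarrow> nat \<Rightarrow> complex" where
  "tshift o' N \<sigma> = (\<lambda>r s p q. if o' \<le> p \<and> p < o' + N \<and> o' \<le> q \<and> q < o' + N then \<sigma> r s (p - o') (q - o') else 0)"

lemma tnorm_shift:
  assumes "o' + N \<le> N'"
  shows "tnorm N' k (tshift o' N \<sigma>) \<le> tnorm N k \<sigma>"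
proof (rule tnorm_least)
  fix l a assume l: "1 \<le> l" and a: "cmat_norm (l * N') (l * N') a \<le> 1"
  define f where "f I = (I div N) * N' + o' + I mod N" for I
  define a2 where "a2 I J = a (f I) (f J)" for I J
  have finj: "inj_on f {i. i < l * N \<and> True}"
  proof (rule inj_onI)
    fix x y assume "x \<in> {i. i < l * N \<and> True}" "y \<in> {i. i < l * N \<and> True}" and e: "f x = f y"
    then have N: "N > 0" by (cases N) auto
    have "x mod N < N" "y mod N < N" using N by simp_all
    then have xm: "o' + x mod N < N'" "o' + y mod N < N'" using assms by linarith+
    have "f x div N' = f y div N'" using e by simp
    then have "(x div N * N' + (o' + x mod N)) div N' = (y div N * N' + (o' + y mod N)) div N'"
      by (simp only: f_def add.assoc)
    then have d: "x div N = y div N" using xm by simp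
    have "f x mod N' = f y mod N'" using e by simp
    then have "(x div N * N' + (o' + x mod N)) mod N' = (y div N * N' + (o' + y mod N)) mod N'"
      by (simp only: f_def add.assoc)
    then have "x mod N = y mod N" using xm by simp
    with d show "x = y" by (metis div_mult_mod_eq)
  qed
  have frange: "f i < l * N'" if "i < l * N" for i
  proof -
    have N: "N > 0" using that by (cases N) auto
    have "i mod N < N" using N by simp
    then have "o' + i mod N < N'" using assms by linarith
    then have "(i div N) * N' + (o' + i mod N) < l * N'"
      using block_idx_lt[of i l N "o' + i mod N" N'] that by simp
    then show ?thesis by (simp add: f_def add.assoc)
  qed
  have a2n: "cmat_norm (l * N) (l * N) a2 \<le> 1"
  proof -
    have "cmat_norm (l * N) (l * N) (\<lambda>i j. if True \<and> True then a (f i) (f j) else 0) \<le> cmat_norm (l * N') (l * N') a"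
      by (rule cm_reindex) (use finj frange in auto)
    moreover have "a2 = (\<lambda>i j. a (f i) (f j))" by (simp add: a2_def fun_eq_iff)
    ultimately show ?thesis using a by simp
  qed
  have eq: "ampl N' k (tshift o' N \<sigma>) a = ampl N k \<sigma> a2"
  proof (intro ext)
    fix i j
    define H where "H p' q' = \<sigma> (i mod k) (j mod k) p' q' *
            a (i div k * N' + (p' + o')) (j div k * N' + (q' + o'))" for p' q'
    define G where "G p' = (\<Sum>q<N. H p' q)" for p'
    have inner: "(\<Sum>q<N'. if o' \<le> q \<and> q < o' + N then H p' (q - o') else 0) = G p'" for p'
      unfolding G_def by (rule shift_sum[OF assms])
    have "ampl N' k (tshift o' N \<sigma>) a i j = (\<Sum>p<N'. if o' \<le> p \<and> p < o' + N then
         (\<Sum>q<N'. if o' \<le> q \<and> q < o' + N then H (p - o') (q - o') else 0) else 0)"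
      unfolding ampl_def tshift_def H_def by (intro sum.cong refl) (auto intro!: sum.cong)
    also have "\<dots> = (\<Sum>p<N'. if o' \<le> p \<and> p < o' + N then G (p - o') else 0)"
      by (simp only: inner)
    also have "\<dots> = (\<Sum>p<N. G p)" by (rule shift_sum[OF assms])
    also have "\<dots> = (\<Sum>p<N. \<Sum>q<N. \<sigma> (i mod k) (j mod k) p q *
            a (i div k * N' + (p + o')) (j div k * N' + (q + o')))"
      by (simp add: G_def H_def)
    also have "\<dots> = ampl N k \<sigma> a2 i j"
      unfolding ampl_def a2_def f_def by (intro sum.cong refl) (simp add: add.assoc add.commute[of o'])
    finally show "ampl N' k (tshift o' N \<sigma>) a i j = ampl N k \<sigma> a2 i j" .
  qed
  show "cmat_norm (l * k) (l * k) (ampl N' k (tshift o' N \<sigma>) a) \<le> tnorm N k \<sigma>"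
    unfolding eq by (rule tnorm_upper[OF l a2n])
qed

locale osp =
  fixes sc :: "complex \<Rightarrow> 'v::ab_group_add \<Rightarrow> 'v"
    and mn :: "nat \<Rightarrow> (nat \<Rightarrow> nat \<Rightarrow> 'v) \<Rightarrow> real"
  assumes os: "operator_space sc mn"

sublocale osp \<subseteq> module sc
  using os unfolding operator_space_def module_iff_vector_space by simp

context osp
begin

lemma mn_nonneg: "x \<in> mat_sp n \<Longrightarrow> 0 \<le> mn n x"
  using os unfolding operator_space_def by blast

lemma mn_eq0: "x \<in> mat_sp n \<Longrightarrow> mn n x = 0 \<Longrightarrow> x = (\<lambda>i j. 0)"
  using os unfolding operator_space_def by blast

lemma mn_triangle: "x \<in> mat_sp n \<Longrightarrow> y \<in> mat_sp n \<Longrightarrow> mn n (\<lambda>i j. x i j + y i j) \<le> mn n x + mn n y"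
  using os unfolding operator_space_def by blast

lemma mn_scale: "x \<in> mat_sp n \<Longrightarrow> mn n (\<lambda>i j. sc c (x i j)) = cmod c * mn n x"
  using os unfolding operator_space_def by blast

lemma mn_mult3: "x \<in> mat_sp n \<Longrightarrow> mn m (mat_mult3 sc m n \<alpha> x \<beta>) \<le> cmat_norm m n \<alpha> * mn n x * cmat_norm n m \<beta>"
  using os unfolding operator_space_def by blast

lemma zero_mat_sp: "(\<lambda>i j. 0::'v) \<in> mat_sp n" by (simp add: mat_sp_def)

lemma mn_zero: "mn n (\<lambda>i j. 0) = 0"
  using mn_scale[OF zero_mat_sp, of n 0] by simp

lemma mat_sp_add: "(x::nat\<Rightarrow>nat\<Rightarrow>'v) \<in> mat_sp n \<Longrightarrow> y \<in> mat_sp n \<Longrightarrow> (\<lambda>i j. x i j + y i j) \<in> mat_sp n"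
  by (simp add: mat_sp_def)

lemma mat_sp_diff: "(x::nat\<Rightarrow>nat\<Rightarrow>'v) \<in> mat_sp n \<Longrightarrow> y \<in> mat_sp n \<Longrightarrow> (\<lambda>i j. x i j - y i j) \<in> mat_sp n"
  by (simp add: mat_sp_def)

lemma mat_sp_scale: "(x::nat\<Rightarrow>nat\<Rightarrow>'v) \<in> mat_sp n \<Longrightarrow> (\<lambda>i j. sc c (x i j)) \<in> mat_sp n"
  by (simp add: mat_sp_def)

lemma mat_sp_sum: "(\<And>b. b \<in> S \<Longrightarrow> (F b :: nat\<Rightarrow>nat\<Rightarrow>'v) \<in> mat_sp n) \<Longrightarrow> (\<lambda>i j. \<Sum>b\<in>S. F b i j) \<in> mat_sp n"
  by (auto simp: mat_sp_def intro!: sum.neutral)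

lemma mn_neg: "x \<in> mat_sp n \<Longrightarrow> mn n (\<lambda>i j. - x i j) = mn n x"
  using mn_scale[of x n "-1"] by simp

lemma mn_sym: "x \<in> mat_sp n \<Longrightarrow> y \<in> mat_sp n \<Longrightarrow> mn n (\<lambda>i j. x i j - y i j) = mn n (\<lambda>i j. y i j - x i j)"
  using mn_neg[OF mat_sp_diff[of y n x]] by simp

lemma mn_sum:
  assumes "finite S" "\<And>b. b \<in> S \<Longrightarrow> F b \<in> mat_sp n"
  shows "mn n (\<lambda>i j. \<Sum>b\<in>S. F b i j) \<le> (\<Sum>b\<in>S. mn n (F b))"
  using assms
proof (induction S rule: finite_induct)
  case empty
  then show ?case using mn_zero by simp
next
  case (insert a S)
  have "mn n (\<lambda>i j. \<Sum>b\<in>insert a S. F b i j) = mn n (\<lambda>i j. F a i j + (\<Sum>b\<in>S. F b i j))"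
    using insert by simp
  also have "\<dots> \<le> mn n (F a) + mn n (\<lambda>i j. \<Sum>b\<in>S. F b i j)"
    by (rule mn_triangle) (use insert in \<open>auto intro!: mat_sp_sum\<close>)
  finally show ?case using insert by simp
qed

lemma mn_reindex:
  assumes y: "y \<in> mat_sp n"
    and hi: "inj_on h {i. i < M \<and> P i}" and hr: "\<And>i. i < M \<Longrightarrow> P i \<Longrightarrow> h i < n"
    and gi: "inj_on g {j. j < M \<and> Q j}" and gr: "\<And>j. j < M \<Longrightarrow> Q j \<Longrightarrow> g j < n"
  shows "mn M (\<lambda>i j. if i < M \<and> j < M \<and> P i \<and> Q j then y (h i) (g j) else 0) \<le> mn n y"
proof -
  define I :: "nat \<Rightarrow> nat \<Rightarrow> complex" where "I = (\<lambda>i j. if i = j then 1 else (0::complex))"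
  define \<alpha> :: "nat \<Rightarrow> nat \<Rightarrow> complex" where "\<alpha> = (\<lambda>i p. if P i \<and> True then I (h i) (id p) else 0)"
  define \<beta> :: "nat \<Rightarrow> nat \<Rightarrow> complex" where "\<beta> = (\<lambda>q j. if True \<and> Q j then I (id q) (g j) else 0)"
  have a1: "cmat_norm M n \<alpha> \<le> 1"
  proof -
    have "cmat_norm M n \<alpha> \<le> cmat_norm n n I"
      unfolding \<alpha>_def by (rule cm_reindex) (use hi hr in auto)
    then show ?thesis using cm_id I_def by (metis order_trans)
  qed
  have b1: "cmat_norm n M \<beta> \<le> 1"
  proof -
    have "cmat_norm n M \<beta> \<le> cmat_norm n n I"
      unfolding \<beta>_def by (rule cm_reindex) (use gi gr in auto)
    then show ?thesis using cm_id I_def by (metis order_trans)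
  qed
  have eq: "mat_mult3 sc M n \<alpha> y \<beta> = (\<lambda>i j. if i < M \<and> j < M \<and> P i \<and> Q j then y (h i) (g j) else 0)"
  proof (intro ext)
    fix i j
    show "mat_mult3 sc M n \<alpha> y \<beta> i j = (if i < M \<and> j < M \<and> P i \<and> Q j then y (h i) (g j) else 0)"
    proof (cases "i < M \<and> j < M \<and> P i \<and> Q j")
      case True
      then have hn: "h i < n" "g j < n" using hr gr by auto
      have "(\<Sum>p<n. \<Sum>q<n. sc (\<alpha> i p * \<beta> q j) (y p q))
          = (\<Sum>p<n. \<Sum>q<n. if h i = p then if g j = q then y p q else 0 else 0)"
        using True by (intro sum.cong refl) (auto simp: \<alpha>_def \<beta>_def I_def)
      also have "\<dots> = y (h i) (g j)" using hn by (rule delta2)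
      finally show ?thesis using True by (simp add: mat_mult3_def)
    next
      case False
      then show ?thesis by (auto simp: mat_mult3_def \<alpha>_def \<beta>_def intro!: sum.neutral)
    qed
  qed
  have "mn M (mat_mult3 sc M n \<alpha> y \<beta>) \<le> cmat_norm M n \<alpha> * mn n y * cmat_norm n M \<beta>"
    by (rule mn_mult3[OF y])
  also have "\<dots> \<le> 1 * mn n y * 1"
    using a1 b1 mn_nonneg[OF y] cm_nonneg by (intro mult_mono) auto
  finally show ?thesis using eq by simp
qed

end

definition Emat :: "nat \<Rightarrow> nat \<Rightarrow> nat \<Rightarrow> nat \<Rightarrow> complex" where
  "Emat p q = (\<lambda>p' q'. if p' = p \<and> q' = q then 1 else 0)"

lemma Tn_expand:
  assumes "t \<in> Tn n"
  shows "t = (\<lambda>p' q'. \<Sum>p<n. \<Sum>q<n. t p q * Emat p q p' q')"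
proof (intro ext)
  fix p' q'
  show "t p' q' = (\<Sum>p<n. \<Sum>q<n. t p q * Emat p q p' q')"
  proof (cases "p' < n \<and> q' < n")
    case True
    have "(\<Sum>p<n. \<Sum>q<n. t p q * Emat p q p' q') = (\<Sum>p<n. \<Sum>q<n. if p' = p then if q' = q then t p q else 0 else 0)"
      by (intro sum.cong refl) (auto simp: Emat_def)
    also have "\<dots> = t p' q'" using True by (intro delta2) auto
    finally show ?thesis by simp
  next
    case False
    then have "t p' q' = 0" using assms by (auto simp: Tn_def)
    moreover have "(\<Sum>p<n. \<Sum>q<n. t p q * Emat p q p' q') = 0"
      using False by (intro sum.neutral ballI) (auto simp: Emat_def)
    ultimately show ?thesis by simp
  qed
qed

lemma Emat_Tn: "p < n \<Longrightarrow> q < n \<Longrightarrow> Emat p q \<in> Tn n"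
  by (auto simp: Emat_def Tn_def)

lemma W_zero: "csubspace_Tn n W \<Longrightarrow> (\<lambda>p q. 0) \<in> W"
  by (simp add: csubspace_Tn_def)

lemma W_add: "csubspace_Tn n W \<Longrightarrow> s \<in> W \<Longrightarrow> t \<in> W \<Longrightarrow> (\<lambda>p q. s p q + t p q) \<in> W"
  by (simp add: csubspace_Tn_def)

lemma W_scale: "csubspace_Tn n W \<Longrightarrow> t \<in> W \<Longrightarrow> (\<lambda>p q. c * t p q) \<in> W"
  by (simp add: csubspace_Tn_def)

lemma W_sub: "csubspace_Tn n W \<Longrightarrow> W \<subseteq> Tn n"
  by (simp add: csubspace_Tn_def)

lemma W_neg: "csubspace_Tn n W \<Longrightarrow> t \<in> W \<Longrightarrow> (\<lambda>p q. - t p q) \<in> W"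
  using W_scale[of n W t "-1"] by simp

lemma W_diff: "csubspace_Tn n W \<Longrightarrow> s \<in> W \<Longrightarrow> t \<in> W \<Longrightarrow> (\<lambda>p q. s p q - t p q) \<in> W"
  using W_add[of n W s "\<lambda>p q. - t p q"] W_neg[of n W t] by simp

lemma W_sum:
  assumes W: "csubspace_Tn n W" and "finite S" and "\<And>b. b \<in> S \<Longrightarrow> F b \<in> W"
  shows "(\<lambda>p q. \<Sum>b\<in>S. F b p q) \<in> W"
  using assms(2,3)
proof (induction S rule: finite_induct)
  case empty
  then show ?case using W_zero[OF W] by simp
next
  case (insert a S)
  then have "(\<lambda>p q. F a p q + (\<Sum>b\<in>S. F b p q)) \<in> W" by (intro W_add[OF W]) auto
  then show ?case using insert by simp
qed

context osp
begin

lemma coexact_rep: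
  assumes G: "subspace G" and W: "csubspace_Tn n W" and D: "dcb_Tquot_less sc mn G n W c"
  shows "\<exists>e A B. e \<in> mat_sp n \<and> (\<forall>p q. e p q \<in> G) \<and> mn n e \<le> max B 0 \<and> A * B < c \<and>
   (\<forall>k d \<delta>. 1 \<le> k \<longrightarrow> d \<in> mat_sp k \<longrightarrow> (\<forall>i j. d i j \<in> G) \<longrightarrow> 0 < \<delta> \<longrightarrow>
      (B \<le> 0 \<longrightarrow> mn k d = 0) \<and>
      (\<exists>\<sigma>. (\<forall>r s p q. r < k \<longrightarrow> s < k \<longrightarrow> (n \<le> p \<or> n \<le> q) \<longrightarrow> \<sigma> r s p q = 0) \<and>
           tnorm n k \<sigma> < A * mn k d + \<delta> \<and> slice sc k n \<sigma> e = d))"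
proof -
  obtain \<phi> A B where
    \<phi>T: "\<And>x. x \<in> G \<Longrightarrow> \<phi> x \<in> Tn n" and
    \<phi>add: "\<And>x y. x \<in> G \<Longrightarrow> y \<in> G \<Longrightarrow> \<phi> (x + y) = (\<lambda>p q. \<phi> x p q + \<phi> y p q)" and
    \<phi>sc: "\<And>a x. x \<in> G \<Longrightarrow> \<phi> (sc a x) = (\<lambda>p q. a * \<phi> x p q)" and
    \<phi>inj: "\<And>x. x \<in> G \<Longrightarrow> \<phi> x \<in> W \<Longrightarrow> x = 0" and
    \<phi>surj: "\<And>t. t \<in> Tn n \<Longrightarrow> \<exists>x\<in>G. (\<lambda>p q. t p q - \<phi> x p q) \<in> W" and
    AB: "A * B < c" and
    est: "\<And>m x. 1 \<le> m \<Longrightarrow> x \<in> mat_sp m \<Longrightarrow> (\<forall>i j. x i j \<in> G) \<Longrightarrow>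
           qnorm n W m (\<lambda>r s. \<phi> (x r s)) \<le> A * mn m x \<and>
           mn m x \<le> B * qnorm n W m (\<lambda>r s. \<phi> (x r s))"
    using D unfolding dcb_Tquot_less_def apply (elim exE conjE) apply (rule that) apply (simp_all only: Ball_def) apply blast+ done
  have G0: "0 \<in> G" using G by (rule subspace_0)
  have \<phi>0: "\<phi> 0 = (\<lambda>p q. 0)" using \<phi>sc[OF G0, of 0] by simp
  have \<phi>diff: "\<phi> (x - y) = (\<lambda>p q. \<phi> x p q - \<phi> y p q)" if "x \<in> G" "y \<in> G" for x y
  proof -
    have "\<phi> x = \<phi> ((x - y) + y)" by simp
    also have "\<dots> = (\<lambda>p q. \<phi> (x - y) p q + \<phi> y p q)" by (rule \<phi>add) (use that G subspace_diff in auto)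
    finally show ?thesis by (simp add: fun_eq_iff)
  qed
  have \<phi>sum: "finite S \<Longrightarrow> (\<And>b. b \<in> S \<Longrightarrow> f b \<in> G) \<Longrightarrow> \<phi> (\<Sum>b\<in>S. f b) = (\<lambda>p q. \<Sum>b\<in>S. \<phi> (f b) p q)" for S f
  proof (induction S rule: finite_induct)
    case empty then show ?case using \<phi>0 by simp
  next
    case (insert a S)
    have "\<phi> (\<Sum>b\<in>insert a S. f b) = \<phi> (f a + (\<Sum>b\<in>S. f b))" using insert by simp
    also have "\<dots> = (\<lambda>p q. \<phi> (f a) p q + \<phi> (\<Sum>b\<in>S. f b) p q)"
      by (rule \<phi>add) (use insert G in \<open>auto intro: subspace_sum\<close>)
    finally show ?case using insert by simp
  qed
  have uniq: "x = x'" if "x \<in> G" "x' \<in> G" "(\<lambda>p q. t p q - \<phi> x p q) \<in> W" "(\<lambda>p q. t p q - \<phi> x' p q) \<in> W" for t x x'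
  proof -
    have "(\<lambda>p q. (t p q - \<phi> x p q) - (t p q - \<phi> x' p q)) \<in> W" by (rule W_diff[OF W that(3,4)])
    then have "\<phi> (x' - x) \<in> W" using \<phi>diff[OF that(2,1)] by simp
    then have "x' - x = 0" using \<phi>inj G that subspace_diff by blast
    then show ?thesis by simp
  qed
  define \<psi> where "\<psi> t = (THE x. x \<in> G \<and> (\<lambda>p q. t p q - \<phi> x p q) \<in> W)" for t
  have \<psi>: "\<psi> t \<in> G \<and> (\<lambda>p q. t p q - \<phi> (\<psi> t) p q) \<in> W" if t: "t \<in> Tn n" for t
  proof -
    obtain x where x: "x \<in> G" "(\<lambda>p q. t p q - \<phi> x p q) \<in> W" using \<phi>surj[OF t] by blast
    have "\<exists>!x. x \<in> G \<and> (\<lambda>p q. t p q - \<phi> x p q) \<in> W"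
      using x uniq by blast
    then show ?thesis unfolding \<psi>_def by (rule theI')
  qed
  have \<psi>eq: "\<psi> t = x" if "x \<in> G" "(\<lambda>p q. t p q - \<phi> x p q) \<in> W" "t \<in> Tn n" for t x
  proof -
    have "\<psi> t \<in> G" "(\<lambda>p q. t p q - \<phi> (\<psi> t) p q) \<in> W" using \<psi>[OF that(3)] by auto
    then show ?thesis using uniq[OF _ that(1) _ that(2)] by blast
  qed
  define e where "e = (\<lambda>p q. if p < n \<and> q < n then \<psi> (Emat p q) else 0)"
  have eG: "e p q \<in> G" for p q using \<psi> Emat_Tn G0 by (auto simp: e_def)
  have esp: "e \<in> mat_sp n" by (auto simp: e_def mat_sp_def)
  have \<psi>lin: "\<psi> t = (\<Sum>p<n. \<Sum>q<n. sc (t p q) (e p q))" if t: "t \<in> Tn n" for t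
  proof (rule \<psi>eq[OF _ _ t])
    show xG: "(\<Sum>p<n. \<Sum>q<n. sc (t p q) (e p q)) \<in> G"
      using G eG by (intro subspace_sum subspace_scale) auto
    have "\<phi> (\<Sum>p<n. \<Sum>q<n. sc (t p q) (e p q)) = (\<lambda>p' q'. \<Sum>p<n. \<phi> (\<Sum>q<n. sc (t p q) (e p q)) p' q')"
      by (rule \<phi>sum) (use G eG in \<open>auto intro!: subspace_sum subspace_scale\<close>)
    also have "\<dots> = (\<lambda>p' q'. \<Sum>p<n. \<Sum>q<n. \<phi> (sc (t p q) (e p q)) p' q')"
      by (subst \<phi>sum) (use G eG in \<open>auto intro!: subspace_sum subspace_scale\<close>)
    also have "\<dots> = (\<lambda>p' q'. \<Sum>p<n. \<Sum>q<n. t p q * \<phi> (e p q) p' q')"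
      using \<phi>sc eG by simp
    finally have \<phi>x: "\<phi> (\<Sum>p<n. \<Sum>q<n. sc (t p q) (e p q)) = (\<lambda>p' q'. \<Sum>p<n. \<Sum>q<n. t p q * \<phi> (e p q) p' q')" .
    have "(\<lambda>p' q'. \<Sum>p<n. \<Sum>q<n. t p q * (Emat p q p' q' - \<phi> (e p q) p' q')) \<in> W"
    proof (rule W_sum[OF W], simp, rule W_sum[OF W], simp)
      fix p q assume "p \<in> {..<n}" "q \<in> {..<n}"
      then have "(\<lambda>p' q'. Emat p q p' q' - \<phi> (e p q) p' q') \<in> W"
        using \<psi>[OF Emat_Tn] by (simp add: e_def)
      then show "(\<lambda>p' q'. t p q * (Emat p q p' q' - \<phi> (e p q) p' q')) \<in> W" by (rule W_scale[OF W])
    qed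
    moreover have "(\<lambda>p' q'. \<Sum>p<n. \<Sum>q<n. t p q * (Emat p q p' q' - \<phi> (e p q) p' q'))
        = (\<lambda>p' q'. t p' q' - \<phi> (\<Sum>p<n. \<Sum>q<n. sc (t p q) (e p q)) p' q')"
    proof -
      have "(\<lambda>p' q'. \<Sum>p<n. \<Sum>q<n. t p q * (Emat p q p' q' - \<phi> (e p q) p' q'))
         = (\<lambda>p' q'. (\<Sum>p<n. \<Sum>q<n. t p q * Emat p q p' q') - (\<Sum>p<n. \<Sum>q<n. t p q * \<phi> (e p q) p' q'))"
        by (simp add: right_diff_distrib sum_subtractf)
      also have "\<dots> = (\<lambda>p' q'. t p' q' - (\<Sum>p<n. \<Sum>q<n. t p q * \<phi> (e p q) p' q'))"
        using Tn_expand[OF t] by (metis (no_types, lifting))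
      finally show ?thesis using \<phi>x by simp
    qed
    ultimately show "(\<lambda>p' q'. t p' q' - \<phi> (\<Sum>p<n. \<Sum>q<n. sc (t p q) (e p q)) p' q') \<in> W" by simp
  qed
  have sliceq: "slice sc k n \<sigma> e = (\<lambda>r s. if r < k \<and> s < k then \<psi> (\<sigma> r s) else 0)"
    if "\<And>r s. r < k \<Longrightarrow> s < k \<Longrightarrow> \<sigma> r s \<in> Tn n" for k \<sigma>
    using that \<psi>lin by (auto simp: slice_def fun_eq_iff)
  define qset where "qset m \<tau> = {tnorm n m (\<lambda>r s p q. \<tau> r s p q - w r s p q) | w. \<forall>r<m. \<forall>s<m. w r s \<in> W}" for m \<tau>
  have qdef: "qnorm n W m \<tau> = Inf (qset m \<tau>)" for m \<tau> by (simp add: qnorm_def qset_def)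
  have qne: "qset m \<tau> \<noteq> {}" for m \<tau>
  proof -
    have "tnorm n m (\<lambda>r s p q. \<tau> r s p q - (\<lambda>r s p q. 0) r s p q) \<in> qset m \<tau>"
      unfolding qset_def mem_Collect_eq by (rule exI[of _ "\<lambda>r s p q. 0"]) (simp add: W_zero[OF W])
    then show ?thesis by auto
  qed
  have qbdd: "bdd_below (qset m \<tau>)" for m \<tau>
    unfolding qset_def bdd_below_def using tnorm_nonneg by blast
  have qnonneg: "0 \<le> qnorm n W m \<tau>" for m \<tau>
    unfolding qdef by (rule cInf_greatest[OF qne]) (auto simp: qset_def tnorm_nonneg)
  have qlower: "qnorm n W m \<tau> \<le> tnorm n m (\<lambda>r s p q. \<tau> r s p q - w r s p q)"
    if "\<forall>r<m. \<forall>s<m. w r s \<in> W" for m \<tau> w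
    unfolding qdef by (rule cInf_lower[OF _ qbdd]) (use that in \<open>auto simp: qset_def\<close>)
  have qless: "\<exists>w. (\<forall>r<m. \<forall>s<m. w r s \<in> W) \<and> tnorm n m (\<lambda>r s p q. \<tau> r s p q - w r s p q) < c'"
    if lt: "qnorm n W m \<tau> < c'" for m \<tau> c'
  proof -
    obtain v where v: "v \<in> qset m \<tau>" "v < c'" using cInf_lessD[OF qne lt[unfolded qdef]] by blast
    from v(1) obtain w where "v = tnorm n m (\<lambda>r s p q. \<tau> r s p q - w r s p q)" "\<forall>r<m. \<forall>s<m. w r s \<in> W"
      unfolding qset_def mem_Collect_eq by (elim exE conjE)
    then show ?thesis using v(2) by auto
  qed
  have en: "mn n e \<le> max B 0"
  proof (cases "n = 0")
    case True
    then have "e = (\<lambda>i j. 0)" by (simp add: e_def fun_eq_iff)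
    then show ?thesis using mn_zero by simp
  next
    case False
    then have n1: "1 \<le> n" by simp
    have e1: "mn n e \<le> B * qnorm n W n (\<lambda>r s. \<phi> (e r s))" using est[OF n1 esp] eG by blast
    define w0 where "w0 r s = (\<lambda>p q. - (Emat r s p q - \<phi> (e r s) p q))" for r s
    have w0W: "\<forall>r<n. \<forall>s<n. w0 r s \<in> W"
    proof (intro allI impI)
      fix r s assume "r < n" "s < n"
      then have "(\<lambda>p q. Emat r s p q - \<phi> (e r s) p q) \<in> W" using \<psi>[OF Emat_Tn] by (simp add: e_def)
      then show "w0 r s \<in> W" unfolding w0_def by (rule W_neg[OF W])
    qed
    have "qnorm n W n (\<lambda>r s. \<phi> (e r s)) \<le> tnorm n n (\<lambda>r s p q. \<phi> (e r s) p q - w0 r s p q)"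
      by (rule qlower[OF w0W])
    also have "\<dots> \<le> 1"
      by (rule tnorm_canon[OF n1]) (auto simp: w0_def Emat_def)
    finally have q1: "qnorm n W n (\<lambda>r s. \<phi> (e r s)) \<le> 1" .
    show ?thesis
    proof (cases "B \<ge> 0")
      case True
      then have "B * qnorm n W n (\<lambda>r s. \<phi> (e r s)) \<le> B * 1" by (intro mult_left_mono q1)
      then show ?thesis using e1 True by simp
    next
      case False
      then have "B * qnorm n W n (\<lambda>r s. \<phi> (e r s)) \<le> 0"
        using qnonneg by (simp add: mult_nonpos_nonneg)
      then show ?thesis using e1 by simp
    qed
  qed
  have main: "(B \<le> 0 \<longrightarrow> mn k d = 0) \<and>
      (\<exists>\<sigma>. (\<forall>r s p q. r < k \<longrightarrow> s < k \<longrightarrow> (n \<le> p \<or> n \<le> q) \<longrightarrow> \<sigma> r s p q = 0) \<and>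
           tnorm n k \<sigma> < A * mn k d + \<delta> \<and> slice sc k n \<sigma> e = d)"
    if k: "1 \<le> k" and d: "d \<in> mat_sp k" and dG: "\<forall>i j. d i j \<in> G" and \<delta>: "0 < \<delta>" for k d \<delta>
  proof
    have e1: "qnorm n W k (\<lambda>r s. \<phi> (d r s)) \<le> A * mn k d"
      and e2: "mn k d \<le> B * qnorm n W k (\<lambda>r s. \<phi> (d r s))" using est[OF k d dG] by auto
    show "B \<le> 0 \<longrightarrow> mn k d = 0"
    proof
      assume "B \<le> 0"
      then have "B * qnorm n W k (\<lambda>r s. \<phi> (d r s)) \<le> 0"
        using qnonneg by (simp add: mult_nonpos_nonneg)
      then show "mn k d = 0" using e2 mn_nonneg[OF d] by simp
    qed
    have "qnorm n W k (\<lambda>r s. \<phi> (d r s)) < A * mn k d + \<delta>" using e1 \<delta> by simp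
    then obtain w where wW: "\<forall>r<k. \<forall>s<k. w r s \<in> W"
      and wt: "tnorm n k (\<lambda>r s p q. \<phi> (d r s) p q - w r s p q) < A * mn k d + \<delta>"
      using qless by blast
    define \<sigma> where "\<sigma> = (\<lambda>r s p q. \<phi> (d r s) p q - w r s p q)"
    have \<sigma>T: "\<sigma> r s \<in> Tn n" if "r < k" "s < k" for r s
    proof -
      have "w r s \<in> Tn n" using W_sub[OF W] wW that by blast
      moreover have "\<phi> (d r s) \<in> Tn n" using \<phi>T dG by blast
      ultimately show ?thesis by (auto simp: \<sigma>_def Tn_def)
    qed
    have "slice sc k n \<sigma> e = d"
    proof -
      have "\<psi> (\<sigma> r s) = d r s" if "r < k" "s < k" for r s
      proof (rule \<psi>eq)
        show "d r s \<in> G" using dG by simp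
        show "\<sigma> r s \<in> Tn n" by (rule \<sigma>T[OF that])
        have "(\<lambda>p q. - w r s p q) \<in> W" using W_neg[OF W] wW that by simp
        then show "(\<lambda>p q. \<sigma> r s p q - \<phi> (d r s) p q) \<in> W" by (simp add: \<sigma>_def)
      qed
      moreover have S: "slice sc k n \<sigma> e = (\<lambda>r s. if r < k \<and> s < k then \<psi> (\<sigma> r s) else 0)"
        by (rule sliceq) (rule \<sigma>T)
      moreover have "d r s = 0" if "\<not> (r < k \<and> s < k)" for r s
        using d that unfolding mat_sp_def by auto
      ultimately show ?thesis by (auto simp: fun_eq_iff)
    qed
    moreover have "\<forall>r s p q. r < k \<longrightarrow> s < k \<longrightarrow> (n \<le> p \<or> n \<le> q) \<longrightarrow> \<sigma> r s p q = 0"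
    proof (intro allI impI)
      fix r s p q assume "r < k" "s < k" "n \<le> p \<or> n \<le> q"
      then show "\<sigma> r s p q = 0" using \<sigma>T[of r s] unfolding Tn_def mem_Collect_eq by blast
    qed
    ultimately show "\<exists>\<sigma>. (\<forall>r s p q. r < k \<longrightarrow> s < k \<longrightarrow> (n \<le> p \<or> n \<le> q) \<longrightarrow> \<sigma> r s p q = 0) \<and>
           tnorm n k \<sigma> < A * mn k d + \<delta> \<and> slice sc k n \<sigma> e = d"
      using wt unfolding \<sigma>_def[symmetric] by blast
  qed
  show ?thesis
  proof -
    have M: "\<forall>k d \<delta>. 1 \<le> k \<longrightarrow> d \<in> mat_sp k \<longrightarrow> (\<forall>i j. d i j \<in> G) \<longrightarrow> 0 < \<delta> \<longrightarrow>
      (B \<le> 0 \<longrightarrow> mn k d = 0) \<and>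
      (\<exists>\<sigma>. (\<forall>r s p q. r < k \<longrightarrow> s < k \<longrightarrow> (n \<le> p \<or> n \<le> q) \<longrightarrow> \<sigma> r s p q = 0) \<and>
           tnorm n k \<sigma> < A * mn k d + \<delta> \<and> slice sc k n \<sigma> e = d)"
      by (intro allI impI) (rule main)
    have eG': "\<forall>p q. e p q \<in> G" using eG by blast
    show ?thesis
      apply (rule exI[of _ e], rule exI[of _ A], rule exI[of _ B])
      apply (intro conjI)
          apply (rule esp)
         apply (rule eG')
        apply (rule en)
       apply (rule AB)
      apply (rule M)
      done
  qed
qed

end

lemma geo_sum: "J \<le> M \<Longrightarrow> (\<Sum>b\<in>{J..<M}. (1/2::real)^b) = 2 * (1/2)^J - 2 * (1/2)^M"
proof (induction M)
  case 0 then show ?case by simp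
next
  case (Suc M)
  show ?case
  proof (cases "J = Suc M")
    case True then show ?thesis by simp
  next
    case False
    then have "J \<le> M" using Suc by simp
    then show ?thesis using Suc by (simp add: atLeastLessThanSuc)
  qed
qed

lemma geo_le: "(\<Sum>b\<in>{J..<M}. (1/2::real)^b) \<le> 2 * (1/2)^J"
proof (cases "J \<le> M")
  case True then show ?thesis using geo_sum[OF True] by simp
next
  case False then show ?thesis by simp
qed

definition offs :: "(nat \<Rightarrow> nat) \<Rightarrow> nat \<Rightarrow> nat" where
  "offs n b = (\<Sum>i<b. n i + 1)"

lemma offs_Suc: "offs n (Suc b) = offs n b + n b + 1" by (simp add: offs_def)

lemma offs_mono: "b \<le> b' \<Longrightarrow> offs n b \<le> offs n b'"
  unfolding offs_def by (rule sum_mono2) auto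

lemma offs_ge: "b \<le> offs n b"
proof -
  have "(\<Sum>i<b. (1::nat)) \<le> (\<Sum>i<b. n i + 1)" by (rule sum_mono) simp
  then show ?thesis by (simp add: offs_def)
qed

lemma offs_lt: "b < b' \<Longrightarrow> offs n b + n b < offs n b'"
  using offs_mono[of "Suc b" b' n] by (simp add: offs_Suc)

definition place :: "(complex \<Rightarrow> 'v \<Rightarrow> 'v::ab_group_add) \<Rightarrow> (nat \<Rightarrow> nat) \<Rightarrow> (nat \<Rightarrow> real) \<Rightarrow>
    (nat \<Rightarrow> nat \<Rightarrow> nat \<Rightarrow> 'v) \<Rightarrow> nat \<Rightarrow> nat \<Rightarrow> nat \<Rightarrow> 'v" where
  "place sc n t e b = (\<lambda>i j. if offs n b \<le> i \<and> i < offs n b + n b \<and> offs n b \<le> j \<and> j < offs n b + n b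
      then sc (of_real (t b)) (e b (i - offs n b) (j - offs n b)) else 0)"

definition bigx :: "(complex \<Rightarrow> 'v \<Rightarrow> 'v::ab_group_add) \<Rightarrow> (nat \<Rightarrow> nat) \<Rightarrow> (nat \<Rightarrow> real) \<Rightarrow>
    (nat \<Rightarrow> nat \<Rightarrow> nat \<Rightarrow> 'v) \<Rightarrow> nat \<Rightarrow> nat \<Rightarrow> 'v" where
  "bigx sc n t e = (\<lambda>i j. \<Sum>b<Suc i. place sc n t e b i j)"

lemma place_zero: "\<not> (offs n b \<le> i \<and> i < offs n b + n b) \<Longrightarrow> place sc n t e b i j = 0"
  by (auto simp: place_def)

lemma place_zero2: "\<not> (offs n b \<le> j \<and> j < offs n b + n b) \<Longrightarrow> place sc n t e b i j = 0"
  by (auto simp: place_def)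

lemma bigx_sum:
  assumes "i < offs n L"
  shows "bigx sc n t e i j = (\<Sum>b<L. place sc n t e b i j)"
proof -
  have "bigx sc n t e i j = (\<Sum>b<Suc i + L. place sc n t e b i j)"
    unfolding bigx_def
  proof (rule sum.mono_neutral_left)
    show "\<forall>b\<in>{..<Suc i + L} - {..<Suc i}. place sc n t e b i j = 0"
    proof
      fix b assume "b \<in> {..<Suc i + L} - {..<Suc i}"
      then have "i < offs n b" using offs_ge[of b n] by auto
      then show "place sc n t e b i j = 0" by (intro place_zero) simp
    qed
  qed auto
  also have "\<dots> = (\<Sum>b<L. place sc n t e b i j)"
  proof (rule sum.mono_neutral_right)
    show "\<forall>b\<in>{..<Suc i + L} - {..<L}. place sc n t e b i j = 0"
    proof
      fix b assume "b \<in> {..<Suc i + L} - {..<L}"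
      then have "i < offs n b" using offs_mono[of L b n] assms by auto
      then show "place sc n t e b i j = 0" by (intro place_zero) simp
    qed
  qed auto
  finally show ?thesis .
qed

context osp
begin

lemma mn_diff_le: "x \<in> mat_sp n \<Longrightarrow> y \<in> mat_sp n \<Longrightarrow> mn n (\<lambda>i j. x i j - y i j) \<le> mn n x + mn n y"
  using mn_triangle[of x n "\<lambda>i j. - y i j"] mn_neg[of y n] by (simp add: mat_sp_def)

lemma trunc_place_bound:
  assumes eb: "e b \<in> mat_sp (n b)" and L: "L \<le> M"
  shows "mn M (trunc L (place sc n t e b)) \<le> mn (n b) (\<lambda>i j. sc (of_real (t b)) (e b i j))"
proof -
  define o' where "o' = offs n b"
  define Pr where "Pr i = (i < L \<and> o' \<le> i \<and> i < o' + n b)" for i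
  have eq: "trunc L (place sc n t e b) = (\<lambda>i j. if i < M \<and> j < M \<and> Pr i \<and> Pr j then
       (\<lambda>i j. sc (of_real (t b)) (e b i j)) (i - o') (j - o') else 0)"
    using L by (auto simp: fun_eq_iff trunc_def place_def Pr_def o'_def)
  have inj: "inj_on (\<lambda>i. i - o') {i. i < M \<and> Pr i}" by (auto simp: inj_on_def Pr_def)
  show ?thesis unfolding eq
    by (rule mn_reindex[OF mat_sp_scale[OF eb] inj _ inj]) (auto simp: Pr_def)
qed

lemma bigx_KV:
  assumes eb: "\<And>b. e b \<in> mat_sp (n b)"
    and bnd: "\<And>b. mn (n b) (\<lambda>i j. sc (of_real (t b)) (e b i j)) \<le> Cc * (1/2)^b"
  shows "bigx sc n t e \<in> KV mn"
  unfolding KV_def mem_Collect_eq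
proof (intro allI impI)
  fix \<epsilon> :: real assume \<epsilon>: "0 < \<epsilon>"
  define x where "x = bigx sc n t e"
  define P where "P = place sc n t e"
  obtain J where J: "(1/2::real)^J < \<epsilon> / (4 * (\<bar>Cc\<bar> + 1))"
    using real_arch_pow_inv[of "\<epsilon> / (4 * (\<bar>Cc\<bar> + 1))" "1/2"] \<epsilon> by auto
  have Cc0: "0 \<le> Cc" using bnd[of 0] mn_nonneg[OF mat_sp_scale[OF eb]] by (metis order_trans power_0 mult_1_right)
  show "\<exists>N0. \<forall>N M. N0 \<le> N \<longrightarrow> N \<le> M \<longrightarrow> mn M (\<lambda>i j. trunc M (bigx sc n t e) i j - trunc N (bigx sc n t e) i j) < \<epsilon>"
  proof (intro exI allI impI)
    fix N M assume N: "offs n J \<le> N" and NM: "N \<le> M"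
    have JM: "J \<le> M" using offs_ge[of J n] N NM by simp
    have Psp: "trunc L (P b) \<in> mat_sp M" if "L \<le> M" for L b
      using that by (auto simp: trunc_def mat_sp_def)
    have deq: "(\<lambda>i j. trunc M x i j - trunc N x i j)
        = (\<lambda>i j. \<Sum>b\<in>{J..<M}. trunc M (P b) i j - trunc N (P b) i j)"
    proof (intro ext)
      fix i j
      show "trunc M x i j - trunc N x i j = (\<Sum>b\<in>{J..<M}. trunc M (P b) i j - trunc N (P b) i j)"
      proof (cases "i < M \<and> j < M")
        case True
        have iM: "i < offs n M" using True offs_ge[of M n] by simp
        have xs: "x i j = (\<Sum>b<M. P b i j)" using bigx_sum[OF iM] by (simp add: x_def P_def)
        have t1: "trunc M x i j = (\<Sum>b<M. trunc M (P b) i j)" using True xs by (simp add: trunc_def)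
        have t2: "trunc N x i j = (\<Sum>b<M. trunc N (P b) i j)"
          using xs by (cases "i < N \<and> j < N") (auto simp: trunc_def)
        have "trunc M x i j - trunc N x i j = (\<Sum>b<M. trunc M (P b) i j - trunc N (P b) i j)"
          unfolding t1 t2 by (simp add: sum_subtractf)
        also have "\<dots> = (\<Sum>b\<in>{J..<M}. trunc M (P b) i j - trunc N (P b) i j)"
        proof (rule sum.mono_neutral_right)
          show "\<forall>b\<in>{..<M} - {J..<M}. trunc M (P b) i j - trunc N (P b) i j = 0"
          proof
            fix b assume "b \<in> {..<M} - {J..<M}"
            then have bJ: "b < J" by auto
            have "offs n b + n b \<le> N" using offs_lt[OF bJ, of n] N by simp
            then show "trunc M (P b) i j - trunc N (P b) i j = 0"
              using True by (auto simp: trunc_def P_def place_def)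
          qed
        qed auto
        finally show ?thesis .
      next
        case False
        then show ?thesis using NM by (auto simp: trunc_def intro!: sum.neutral)
      qed
    qed
    have "mn M (\<lambda>i j. trunc M x i j - trunc N x i j)
        \<le> (\<Sum>b\<in>{J..<M}. mn M (\<lambda>i j. trunc M (P b) i j - trunc N (P b) i j))"
      unfolding deq by (rule mn_sum) (auto intro!: mat_sp_diff Psp NM)
    also have "\<dots> \<le> (\<Sum>b\<in>{J..<M}. 2 * Cc * (1/2)^b)"
    proof (rule sum_mono)
      fix b assume "b \<in> {J..<M}"
      have "mn M (\<lambda>i j. trunc M (P b) i j - trunc N (P b) i j) \<le> mn M (trunc M (P b)) + mn M (trunc N (P b))"
        by (rule mn_diff_le) (auto intro!: Psp NM)
      also have "\<dots> \<le> Cc * (1/2)^b + Cc * (1/2)^b"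
        using trunc_place_bound[of e b n M M t, OF eb order_refl] trunc_place_bound[of e b n N M t, OF eb NM] bnd[of b]
        unfolding P_def by linarith
      finally show "mn M (\<lambda>i j. trunc M (P b) i j - trunc N (P b) i j) \<le> 2 * Cc * (1/2)^b" by simp
    qed
    also have "\<dots> = 2 * Cc * (\<Sum>b\<in>{J..<M}. (1/2)^b)" by (simp add: sum_distrib_left)
    also have "\<dots> \<le> 2 * Cc * (2 * (1/2)^J)" using Cc0 geo_le by (intro mult_left_mono) auto
    also have "\<dots> < \<epsilon>"
    proof -
      have "4 * (\<bar>Cc\<bar> + 1) * (1/2::real)^J < \<epsilon>" using J by (simp add: field_simps)
      moreover have "4 * Cc * (1/2::real)^J \<le> 4 * (\<bar>Cc\<bar> + 1) * (1/2::real)^J"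
        by (intro mult_right_mono) auto
      moreover have "2 * Cc * (2 * (1/2::real)^J) = 4 * Cc * (1/2::real)^J" by simp
      ultimately show ?thesis by linarith
    qed
    finally show "mn M (\<lambda>i j. trunc M (bigx sc n t e) i j - trunc N (bigx sc n t e) i j) < \<epsilon>"
      unfolding x_def .
  qed
qed

end

definition stot :: "(nat \<Rightarrow> nat) \<Rightarrow> (nat \<Rightarrow> real) \<Rightarrow> (nat \<Rightarrow> nat \<Rightarrow> nat \<Rightarrow> nat \<Rightarrow> nat \<Rightarrow> complex) \<Rightarrow> nat \<Rightarrow>
     nat \<Rightarrow> nat \<Rightarrow> nat \<Rightarrow> nat \<Rightarrow> complex" where
  "stot n t \<sigma> J = (\<lambda>r s p q. \<Sum>b<J. tshift (offs n b) (n b) (\<lambda>r s p q. of_real (1 / t b) * \<sigma> b r s p q) r s p q)"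

lemma stot_support:
  assumes "offs n J \<le> p \<or> offs n J \<le> q"
  shows "stot n t \<sigma> J r s p q = 0"
proof -
  have "tshift (offs n b) (n b) (\<lambda>r s p q. of_real (1 / t b) * \<sigma> b r s p q) r s p q = 0" if "b < J" for b
    using offs_lt[OF that, of n] assms by (auto simp: tshift_def)
  then show ?thesis by (simp add: stot_def)
qed

lemma stot_tnorm:
  "tnorm (offs n J) k (stot n t \<sigma> J) \<le> (\<Sum>b<J. \<bar>1 / t b\<bar> * tnorm (n b) k (\<sigma> b))"
proof -
  have "tnorm (offs n J) k (stot n t \<sigma> J) \<le> (\<Sum>b<J. tnorm (offs n J) k (tshift (offs n b) (n b) (\<lambda>r s p q. of_real (1 / t b) * \<sigma> b r s p q)))"
    unfolding stot_def by (rule tnorm_sum) simp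
  also have "\<dots> \<le> (\<Sum>b<J. \<bar>1 / t b\<bar> * tnorm (n b) k (\<sigma> b))"
  proof (rule sum_mono)
    fix b assume "b \<in> {..<J}"
    then have "offs n b + n b \<le> offs n J" using offs_lt[of b J n] by simp
    then have "tnorm (offs n J) k (tshift (offs n b) (n b) (\<lambda>r s p q. of_real (1 / t b) * \<sigma> b r s p q))
        \<le> tnorm (n b) k (\<lambda>r s p q. of_real (1 / t b) * \<sigma> b r s p q)" by (rule tnorm_shift)
    also have "\<dots> \<le> cmod (of_real (1 / t b)) * tnorm (n b) k (\<sigma> b)" by (rule tnorm_scale)
    also have "\<dots> = \<bar>1 / t b\<bar> * tnorm (n b) k (\<sigma> b)" by (simp only: norm_of_real)
    finally show "tnorm (offs n J) k (tshift (offs n b) (n b) (\<lambda>r s p q. of_real (1 / t b) * \<sigma> b r s p q))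
        \<le> \<bar>1 / t b\<bar> * tnorm (n b) k (\<sigma> b)" .
  qed
  finally show ?thesis .
qed

context osp
begin

lemma slice_bigx:
  assumes t: "\<And>b. t b \<noteq> 0"
  shows "slice sc k (offs n J) (stot n t \<sigma> J) (bigx sc n t e) = (\<lambda>r s. \<Sum>b<J. slice sc k (n b) (\<sigma> b) (e b) r s)"
proof (intro ext)
  fix r s
  define N where "N = offs n J"
  define S where "S b p q = tshift (offs n b) (n b) (\<lambda>r s p q. of_real (1 / t b) * \<sigma> b r s p q) r s p q" for b p q
  define P where "P = place sc n t e"
  show "slice sc k (offs n J) (stot n t \<sigma> J) (bigx sc n t e) r s = (\<Sum>b<J. slice sc k (n b) (\<sigma> b) (e b) r s)"
  proof (cases "r < k \<and> s < k")
    case False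
    then show ?thesis by (auto simp: slice_def)
  next
    case True
    have blk: "sc (S b p q) (P b' p q) = 0" if "b \<noteq> b'" for b b' p q
    proof (cases "offs n b \<le> p \<and> p < offs n b + n b")
      case True
      have "\<not> (offs n b' \<le> p \<and> p < offs n b' + n b')"
      proof
        assume b': "offs n b' \<le> p \<and> p < offs n b' + n b'"
        show False
        proof (cases "b < b'")
          case True then show False using offs_lt[OF True, of n] b' \<open>offs n b \<le> p \<and> p < offs n b + n b\<close> by simp
        next
          case False
          then have "b' < b" using that by simp
          then show False using offs_lt[of b' b n] b' \<open>offs n b \<le> p \<and> p < offs n b + n b\<close> by simp
        qed
      qed
      then have "P b' p q = 0" unfolding P_def by (rule place_zero)
      then show ?thesis by simp
    next
      case False
      then have "S b p q = 0" by (auto simp: S_def tshift_def)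
      then show ?thesis by simp
    qed
    have inner: "sc (\<Sum>b<J. S b p q) (bigx sc n t e p q) = (\<Sum>b<J. sc (S b p q) (P b p q))" if p: "p < N" for p q
    proof -
      have "bigx sc n t e p q = (\<Sum>b'<J. P b' p q)" using bigx_sum[of p n J] p by (simp add: N_def P_def)
      then have "sc (\<Sum>b<J. S b p q) (bigx sc n t e p q) = (\<Sum>b<J. sc (S b p q) (\<Sum>b'<J. P b' p q))"
        by (simp only: scale_sum_left)
      also have "\<dots> = (\<Sum>b<J. \<Sum>b'<J. sc (S b p q) (P b' p q))"
        by (simp only: scale_sum_right)
      also have "\<dots> = (\<Sum>b<J. \<Sum>b'<J. if b' = b then sc (S b p q) (P b p q) else 0)"
        by (intro sum.cong refl) (auto simp: blk)
      also have "\<dots> = (\<Sum>b<J. sc (S b p q) (P b p q))" by (simp add: sum.delta)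
      finally show ?thesis .
    qed
    have "slice sc k (offs n J) (stot n t \<sigma> J) (bigx sc n t e) r s
        = (\<Sum>p<N. \<Sum>q<N. \<Sum>b<J. sc (S b p q) (P b p q))"
      using True inner by (simp add: slice_def stot_def S_def N_def)
    also have "\<dots> = (\<Sum>b<J. \<Sum>p<N. \<Sum>q<N. sc (S b p q) (P b p q))"
      by (simp add: sum.swap[of _ "{..<J}"])
    also have "\<dots> = (\<Sum>b<J. slice sc k (n b) (\<sigma> b) (e b) r s)"
    proof (rule sum.cong[OF refl])
      fix b assume "b \<in> {..<J}"
      then have bN: "offs n b + n b \<le> N" using offs_lt[of b J n] by (simp add: N_def)
      define o' where "o' = offs n b"
      define H where "H p' q' = sc (\<sigma> b r s p' q') (e b p' q')" for p' q'
      define G where "G p' = (\<Sum>q<n b. H p' q)" for p'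
      have inner2: "(\<Sum>q<N. if o' \<le> q \<and> q < o' + n b then H p' (q - o') else 0) = G p'" for p'
        unfolding G_def by (rule shift_sum) (use bN in \<open>simp add: o'_def\<close>)
      have tt: "of_real (1 / t b) * of_real (t b) = (1::complex)" using t[of b]
        by (simp flip: of_real_mult)
      have "(\<Sum>p<N. \<Sum>q<N. sc (S b p q) (P b p q)) = (\<Sum>p<N. if o' \<le> p \<and> p < o' + n b then
           (\<Sum>q<N. if o' \<le> q \<and> q < o' + n b then H (p - o') (q - o') else 0) else 0)"
        using t[of b] by (intro sum.cong refl) (auto simp: S_def P_def place_def tshift_def H_def o'_def tt intro!: sum.cong)
      also have "\<dots> = (\<Sum>p<N. if o' \<le> p \<and> p < o' + n b then G (p - o') else 0)"
        by (simp only: inner2)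
      also have "\<dots> = (\<Sum>p<n b. G p)" by (rule shift_sum) (use bN in \<open>simp add: o'_def\<close>)
      also have "\<dots> = slice sc k (n b) (\<sigma> b) (e b) r s"
        using True by (simp add: G_def H_def slice_def)
      finally show "(\<Sum>p<N. \<Sum>q<N. sc (S b p q) (P b p q)) = slice sc k (n b) (\<sigma> b) (e b) r s" .
    qed
    finally show ?thesis .
  qed
qed

end

context osp
begin

lemma main_osp:
  assumes sub: "subcoexact sc mn lam" and ms: "matrix_set K" and cc: "completely_compact sc mn K"
  shows "operator_compact sc mn K"
proof -
  have mcl: "mclosed mn K" using cc by (simp add: completely_compact_def)
  obtain C where Cb: "\<And>n x. 1 \<le> n \<Longrightarrow> x \<in> K n \<Longrightarrow> mn n x \<le> C"
    using cc unfolding completely_compact_def completely_bounded_def by blast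
  have approx: "\<forall>\<epsilon>>0. \<exists>V\<epsilon>. fin_dim_subspace sc V\<epsilon> \<and>
        (\<forall>n\<ge>1. \<forall>x\<in>K n. \<exists>y\<in>mat_sp n. (\<forall>i j. y i j \<in> V\<epsilon>) \<and> mn n (\<lambda>i j. x i j - y i j) < \<epsilon>)"
    using cc by (simp add: completely_compact_def)
  define C0 where "C0 = max C 0"
  define \<epsilon> where "\<epsilon> b = (if b = 0 then C0 + 1 else (1/4::real)^b)" for b
  have C00: "0 \<le> C0" by (simp add: C0_def)
  have \<epsilon>pos: "0 < \<epsilon> b" for b using C00 by (simp add: \<epsilon>_def)
  have exV: "\<forall>b. \<exists>Vb. fin_dim_subspace sc Vb \<and>
        (\<forall>n\<ge>1. \<forall>x\<in>K n. \<exists>y\<in>mat_sp n. (\<forall>i j. y i j \<in> Vb) \<and> mn n (\<lambda>i j. x i j - y i j) < \<epsilon> b)"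
  proof
    fix b
    show "\<exists>Vb. fin_dim_subspace sc Vb \<and>
        (\<forall>n\<ge>1. \<forall>x\<in>K n. \<exists>y\<in>mat_sp n. (\<forall>i j. y i j \<in> Vb) \<and> mn n (\<lambda>i j. x i j - y i j) < \<epsilon> b)"
      using approx[rule_format, OF \<epsilon>pos[of b]] .
  qed
  obtain V where V: "\<And>b. fin_dim_subspace sc (V b)"
    and Vapp: "\<And>b n x. 1 \<le> n \<Longrightarrow> x \<in> K n \<Longrightarrow> \<exists>y\<in>mat_sp n. (\<forall>i j. y i j \<in> V b) \<and> mn n (\<lambda>i j. x i j - y i j) < \<epsilon> b"
  proof -
    from choice[OF exV] obtain V where "\<forall>b. fin_dim_subspace sc (V b) \<and>
        (\<forall>n\<ge>1. \<forall>x\<in>K n. \<exists>y\<in>mat_sp n. (\<forall>i j. y i j \<in> V b) \<and> mn n (\<lambda>i j. x i j - y i j) < \<epsilon> b)"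
      by (rule exE)
    then show ?thesis using that by blast
  qed
  have exB: "\<forall>b. \<exists>Bs. finite Bs \<and> V b = span Bs" using V unfolding fin_dim_subspace_def by blast
  obtain Bs where Bs: "\<And>b. finite (Bs b)" "\<And>b. V b = span (Bs b)"
  proof -
    from choice[OF exB] obtain Bs where "\<forall>b. finite (Bs b) \<and> V b = span (Bs b)" by (rule exE)
    then show ?thesis using that by blast
  qed
  define Good where "Good b G nn e A B \<longleftrightarrow> subspace G \<and> V b \<subseteq> G \<and> V (Suc b) \<subseteq> G \<and>
     e \<in> mat_sp nn \<and> (\<forall>p q. e p q \<in> G) \<and> mn nn e \<le> max B 0 \<and> A * B < lam + 1 \<and>
   (\<forall>k d \<delta>. 1 \<le> k \<longrightarrow> d \<in> mat_sp k \<longrightarrow> (\<forall>i j. d i j \<in> G) \<longrightarrow> 0 < \<delta> \<longrightarrow>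
      (B \<le> 0 \<longrightarrow> mn k d = 0) \<and>
      (\<exists>\<sigma>. (\<forall>r s p q. r < k \<longrightarrow> s < k \<longrightarrow> (nn \<le> p \<or> nn \<le> q) \<longrightarrow> \<sigma> r s p q = 0) \<and>
           tnorm nn k \<sigma> < A * mn k d + \<delta> \<and> slice sc k nn \<sigma> e = d))" for b G nn e A B
  have ex: "\<forall>b. \<exists>G nn e A B. Good b G nn e A B"
  proof
    fix b
    define F where "F = span (Bs b \<union> Bs (Suc b))"
    have F: "fin_dim_subspace sc F" unfolding fin_dim_subspace_def F_def using Bs(1) by blast
    have VF: "V b \<subseteq> F" "V (Suc b) \<subseteq> F" unfolding F_def Bs(2) by (rule span_mono, blast)+
    obtain G where G: "fin_dim_subspace sc G" "F \<subseteq> G" "coexact sc mn lam G"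
      using sub F unfolding subcoexact_def by blast
    obtain nn W where W: "csubspace_Tn nn W" "dcb_Tquot_less sc mn G nn W (lam + 1)"
      using G(3) unfolding coexact_def by (metis zero_less_one)
    have Gs: "subspace G" using G(1) unfolding fin_dim_subspace_def by blast
    obtain e A B where r: "e \<in> mat_sp nn \<and> (\<forall>p q. e p q \<in> G) \<and> mn nn e \<le> max B 0 \<and> A * B < lam + 1 \<and>
   (\<forall>k d \<delta>. 1 \<le> k \<longrightarrow> d \<in> mat_sp k \<longrightarrow> (\<forall>i j. d i j \<in> G) \<longrightarrow> 0 < \<delta> \<longrightarrow>
      (B \<le> 0 \<longrightarrow> mn k d = 0) \<and>
      (\<exists>\<sigma>. (\<forall>r s p q. r < k \<longrightarrow> s < k \<longrightarrow> (nn \<le> p \<or> nn \<le> q) \<longrightarrow> \<sigma> r s p q = 0) \<and>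
           tnorm nn k \<sigma> < A * mn k d + \<delta> \<and> slice sc k nn \<sigma> e = d))"
      using coexact_rep[OF Gs W] by blast
    have "Good b G nn e A B" unfolding Good_def using r Gs VF G(2) by blast
    then show "\<exists>G nn e A B. Good b G nn e A B" by blast
  qed
  obtain G where g1: "\<forall>b. \<exists>nn e A B. Good b (G b) nn e A B" using choice[OF ex] by (rule exE)
  obtain n where g2: "\<forall>b. \<exists>e A B. Good b (G b) (n b) e A B" using choice[OF g1] by (rule exE)
  obtain e where g3: "\<forall>b. \<exists>A B. Good b (G b) (n b) (e b) A B" using choice[OF g2] by (rule exE)
  obtain A where g4: "\<forall>b. \<exists>B. Good b (G b) (n b) (e b) (A b) B" using choice[OF g3] by (rule exE)
  obtain B where g5: "\<forall>b. Good b (G b) (n b) (e b) (A b) (B b)" using choice[OF g4] by (rule exE)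
  have good: "Good b (G b) (n b) (e b) (A b) (B b)" for b using g5 by blast
  note gdb = good[unfolded Good_def]
  have Gsub: "subspace (G b)" for b using gdb[of b] by (rule conjunct1)
  have VG1: "V b \<subseteq> G b" for b using gdb[of b] by (rule conjunct2[THEN conjunct1])
  have VG2: "V (Suc b) \<subseteq> G b" for b using gdb[of b] by (rule conjunct2[THEN conjunct2, THEN conjunct1])
  have esp: "e b \<in> mat_sp (n b)" for b using gdb[of b] by (rule conjunct2[THEN conjunct2, THEN conjunct2, THEN conjunct1])
  have eG: "\<forall>p q. e b p q \<in> G b" for b
    using gdb[of b] by (rule conjunct2[THEN conjunct2, THEN conjunct2, THEN conjunct2, THEN conjunct1])
  have en: "mn (n b) (e b) \<le> max (B b) 0" for b
    using gdb[of b] by (rule conjunct2[THEN conjunct2, THEN conjunct2, THEN conjunct2, THEN conjunct2, THEN conjunct1])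
  have AB: "A b * B b < lam + 1" for b
    using gdb[of b] by (rule conjunct2[THEN conjunct2, THEN conjunct2, THEN conjunct2, THEN conjunct2, THEN conjunct2, THEN conjunct1])
  have rep: "\<forall>k d \<delta>. 1 \<le> k \<longrightarrow> d \<in> mat_sp k \<longrightarrow> (\<forall>i j. d i j \<in> G b) \<longrightarrow> 0 < \<delta> \<longrightarrow>
      (B b \<le> 0 \<longrightarrow> mn k d = 0) \<and>
      (\<exists>\<sigma>. (\<forall>r s p q. r < k \<longrightarrow> s < k \<longrightarrow> (n b \<le> p \<or> n b \<le> q) \<longrightarrow> \<sigma> r s p q = 0) \<and>
           tnorm (n b) k \<sigma> < A b * mn k d + \<delta> \<and> slice sc k (n b) \<sigma> (e b) = d)" for b
    using gdb[of b] by (rule conjunct2[THEN conjunct2, THEN conjunct2, THEN conjunct2, THEN conjunct2, THEN conjunct2, THEN conjunct2])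
  define \<Lambda> where "\<Lambda> = max (lam + 1) 0"
  define \<Lambda>' where "\<Lambda>' = \<Lambda> + 1"
  have \<Lambda>0: "0 \<le> \<Lambda>" and \<Lambda>'1: "1 \<le> \<Lambda>'" and \<Lambda>\<Lambda>': "\<Lambda> \<le> \<Lambda>'" by (auto simp: \<Lambda>'_def \<Lambda>_def)
  define \<tau> where "\<tau> b = 8 * \<Lambda>' * \<epsilon> b * 2^b" for b
  have \<tau>pos: "0 < \<tau> b" for b using \<epsilon>pos[of b] \<Lambda>'1 by (simp add: \<tau>_def)
  define t where "t b = (if B b > 0 then \<tau> b / B b else 1)" for b
  have tpos: "0 < t b" for b using \<tau>pos[of b] by (simp add: t_def)
  define \<delta> where "\<delta> b = (if B b > 0 then \<tau> b * (1/2)^b / (4 * B b) else (1/2)^b / 4)" for b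
  have \<delta>pos: "0 < \<delta> b" for b using \<tau>pos[of b] by (simp add: \<delta>_def)
  define Cc where "Cc = 8 * \<Lambda>' * (C0 + 1)"
  have half: "(2::real)^b * (1/2)^b = 1" for b by (simp flip: power_mult_distrib)
  have \<tau>le: "\<tau> b \<le> Cc * (1/2)^b" for b
  proof (cases "b = 0")
    case True then show ?thesis by (simp add: \<tau>_def \<epsilon>_def Cc_def)
  next
    case False
    have "(1/4::real)^b * 2^b = (1/2)^b" by (simp flip: power_mult_distrib)
    then have "\<tau> b = 8 * \<Lambda>' * (1/2)^b" using False by (simp add: \<tau>_def \<epsilon>_def mult.assoc)
    also have "\<dots> \<le> Cc * (1/2)^b" unfolding Cc_def using \<Lambda>'1 C00
      by (intro mult_right_mono) auto
    finally show ?thesis .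
  qed
  have tbound: "mn (n b) (\<lambda>i j. sc (of_real (t b)) (e b i j)) \<le> Cc * (1/2)^b" for b
  proof -
    have "mn (n b) (\<lambda>i j. sc (of_real (t b)) (e b i j)) = t b * mn (n b) (e b)"
      using mn_scale[OF esp[of b], where c="complex_of_real (t b)"] tpos[of b] by simp
    also have "\<dots> \<le> \<tau> b"
    proof (cases "B b > 0")
      case True
      then have "t b * mn (n b) (e b) \<le> t b * B b" using en[of b] tpos[of b] by (intro mult_left_mono) auto
      then show ?thesis using True by (simp add: t_def)
    next
      case False
      then have "mn (n b) (e b) = 0" using en[of b] mn_nonneg[OF esp[of b]] by (simp add: max_def)
      then show ?thesis using \<tau>pos[of b] by simp
    qed
    also have "\<dots> \<le> Cc * (1/2)^b" by (rule \<tau>le)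
    finally show ?thesis .
  qed
  define x where "x = bigx sc n t e"
  have xKV: "x \<in> KV mn" unfolding x_def by (rule bigx_KV[OF esp tbound])
  have cover: "K k \<subseteq> mclosure mn k (amc_hull sc k x)" if k: "1 \<le> k" for k
  proof
    fix y assume yK: "y \<in> K k"
    have ysp: "y \<in> mat_sp k" using ms k yK unfolding matrix_set_def by blast
    have exz: "\<forall>b. \<exists>z. z \<in> mat_sp k \<and> (\<forall>i j. z i j \<in> V b) \<and> mn k (\<lambda>i j. y i j - z i j) < \<epsilon> b"
      using Vapp[OF k yK] by blast
    obtain z where z: "\<forall>b. z b \<in> mat_sp k \<and> (\<forall>i j. z b i j \<in> V b) \<and> mn k (\<lambda>i j. y i j - z b i j) < \<epsilon> b"
      using choice[OF exz] by (rule exE)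
    have zsp: "z b \<in> mat_sp k" and zV: "z b i j \<in> V b" and zd: "mn k (\<lambda>i j. y i j - z b i j) < \<epsilon> b" for b i j
      using z by blast+
    have zd': "mn k (\<lambda>i j. z b i j - y i j) < \<epsilon> b" for b
      using zd[of b] mn_sym[OF ysp zsp[of b]] by simp
    define z' where "z' b = (if b = 0 then (\<lambda>i j. 0) else z b)" for b
    define d where "d b = (\<lambda>i j. z' (Suc b) i j - z' b i j)" for b
    have z'sp: "z' b \<in> mat_sp k" for b using zsp zero_mat_sp by (simp add: z'_def)
    have dsp: "d b \<in> mat_sp k" for b unfolding d_def by (rule mat_sp_diff[OF z'sp z'sp])
    have dG: "\<forall>i j. d b i j \<in> G b" for b
    proof (intro allI)
      fix i j
      have "z' (Suc b) i j \<in> G b" using zV[of "Suc b" i j] VG2[of b] by (auto simp: z'_def)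
      moreover have "z' b i j \<in> G b"
        using zV[of b i j] VG1[of b] subspace_0[OF Gsub[of b]] by (auto simp: z'_def)
      ultimately show "d b i j \<in> G b" unfolding d_def by (rule subspace_diff[OF Gsub])
    qed
    have dnorm: "mn k (d b) \<le> 2 * \<epsilon> b" for b
    proof (cases "b = 0")
      case True
      have "d b = (\<lambda>i j. (z 1 i j - y i j) + y i j)" using True by (simp add: d_def z'_def)
      then have "mn k (d b) \<le> mn k (\<lambda>i j. z 1 i j - y i j) + mn k y"
        using mn_triangle[OF mat_sp_diff[OF zsp ysp] ysp] by simp
      also have "\<dots> \<le> \<epsilon> 1 + C0" using zd'[of 1] Cb[OF k yK] by (simp add: C0_def)
      also have "\<dots> \<le> 2 * \<epsilon> b" using True C00 by (simp add: \<epsilon>_def)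
      finally show ?thesis .
    next
      case False
      have "d b = (\<lambda>i j. (z (Suc b) i j - y i j) + (y i j - z b i j))" using False by (simp add: d_def z'_def)
      then have "mn k (d b) \<le> mn k (\<lambda>i j. z (Suc b) i j - y i j) + mn k (\<lambda>i j. y i j - z b i j)"
        using mn_triangle[OF mat_sp_diff[OF zsp ysp] mat_sp_diff[OF ysp zsp]] by simp
      also have "\<dots> \<le> \<epsilon> (Suc b) + \<epsilon> b" using zd'[of "Suc b"] zd[of b] by simp
      also have "\<dots> \<le> 2 * \<epsilon> b"
      proof -
        have "(1/4::real)^(Suc b) \<le> (1/4)^b" by (simp add: power_le_one)
        then show ?thesis using False by (simp add: \<epsilon>_def)
      qed
      finally show ?thesis .
    qed
    have repb: "(B b \<le> 0 \<longrightarrow> mn k (d b) = 0) \<and>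
      (\<exists>\<sigma>. (\<forall>r s p q. r < k \<longrightarrow> s < k \<longrightarrow> (n b \<le> p \<or> n b \<le> q) \<longrightarrow> \<sigma> r s p q = 0) \<and>
           tnorm (n b) k \<sigma> < A b * mn k (d b) + \<delta> b \<and> slice sc k (n b) \<sigma> (e b) = d b)" for b
      using rep[of b] k dsp[of b] dG[of b] \<delta>pos[of b] by blast
    have Bz: "B b \<le> 0 \<Longrightarrow> mn k (d b) = 0" for b using repb[of b] by blast
    have ex\<sigma>: "\<forall>b. \<exists>\<sigma>. tnorm (n b) k \<sigma> < A b * mn k (d b) + \<delta> b \<and> slice sc k (n b) \<sigma> (e b) = d b"
      using repb by blast
    obtain \<sigma> where \<sigma>: "\<forall>b. tnorm (n b) k (\<sigma> b) < A b * mn k (d b) + \<delta> b \<and> slice sc k (n b) (\<sigma> b) (e b) = d b"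
      using choice[OF ex\<sigma>] by (rule exE)
    have \<sigma>t: "tnorm (n b) k (\<sigma> b) < A b * mn k (d b) + \<delta> b" and \<sigma>s: "slice sc k (n b) (\<sigma> b) (e b) = d b" for b
      using \<sigma> by blast+
    have key: "\<bar>1 / t b\<bar> * tnorm (n b) k (\<sigma> b) \<le> (1/2)^b / 2" for b
    proof (cases "B b > 0")
      case True
      have dn0: "0 \<le> mn k (d b)" by (rule mn_nonneg[OF dsp])
      have "A b * B b \<le> \<Lambda>" using AB[of b] by (simp add: \<Lambda>_def)
      then have "A b * B b * mn k (d b) \<le> \<Lambda> * mn k (d b)" using dn0 by (rule mult_right_mono)
      also have "\<dots> \<le> \<Lambda> * (2 * \<epsilon> b)" using dnorm[of b] \<Lambda>0 by (rule mult_left_mono)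
      also have "\<dots> \<le> \<Lambda>' * (2 * \<epsilon> b)" using \<Lambda>\<Lambda>' \<epsilon>pos[of b] by (intro mult_right_mono) auto
      also have "\<dots> = \<tau> b * (1/2)^b / 4"
      proof -
        have "\<tau> b * (1/2)^b / 4 = 2 * \<Lambda>' * \<epsilon> b * (2^b * (1/2)^b)" by (simp add: \<tau>_def)
        then show ?thesis using half[of b] by simp
      qed
      finally have c1: "A b * B b * mn k (d b) \<le> \<tau> b * (1/2)^b / 4" .
      have c2: "\<delta> b * B b = \<tau> b * (1/2)^b / 4" using True by (simp add: \<delta>_def)
      have "tnorm (n b) k (\<sigma> b) * B b \<le> (A b * mn k (d b) + \<delta> b) * B b"
        using \<sigma>t[of b] True by (intro mult_right_mono) auto
      also have "\<dots> = A b * B b * mn k (d b) + \<delta> b * B b" by (simp add: algebra_simps)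
      also have "\<dots> \<le> \<tau> b * (1/2)^b / 2" using c1 c2 by simp
      finally have c3: "tnorm (n b) k (\<sigma> b) * B b \<le> \<tau> b * (1/2)^b / 2" .
      have "\<bar>1 / t b\<bar> * tnorm (n b) k (\<sigma> b) = tnorm (n b) k (\<sigma> b) * B b / \<tau> b"
        using True \<tau>pos[of b] by (simp add: t_def)
      also have "\<dots> \<le> (\<tau> b * (1/2)^b / 2) / \<tau> b" using c3 \<tau>pos[of b] by (intro divide_right_mono) auto
      also have "\<dots> = (1/2)^b / 2" using \<tau>pos[of b] by simp
      finally show ?thesis .
    next
      case False
      then have "mn k (d b) = 0" using Bz by simp
      then have "tnorm (n b) k (\<sigma> b) < (1/2)^b / 4" using \<sigma>t[of b] False by (simp add: \<delta>_def)
      moreover have "0 \<le> tnorm (n b) k (\<sigma> b)" by (rule tnorm_nonneg)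
      ultimately show ?thesis using False by (simp add: t_def)
    qed
    show "y \<in> mclosure mn k (amc_hull sc k x)"
      unfolding mclosure_def mem_Collect_eq
    proof (intro conjI allI impI)
      show "y \<in> mat_sp k" by (rule ysp)
      fix eps :: real assume eps: "0 < eps"
      obtain J0 where J0: "(1/4::real)^J0 < eps" using real_arch_pow_inv[of eps "1/4"] eps by auto
      define J where "J = Suc J0"
      have \<epsilon>J: "\<epsilon> J < eps"
      proof -
        have "(1/4::real)^(Suc J0) \<le> (1/4)^J0" by (simp add: power_le_one)
        then have "(1/4::real)^(Suc J0) < eps" using J0 by linarith
        then show ?thesis by (simp only: \<epsilon>_def J_def) simp
      qed
      define w where "w = slice sc k (offs n J) (stot n t \<sigma> J) x"
      have supp: "\<forall>r s p q. r < k \<longrightarrow> s < k \<longrightarrow> (offs n J \<le> p \<or> offs n J \<le> q) \<longrightarrow> stot n t \<sigma> J r s p q = 0"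
        using stot_support by blast
      have tn: "tnorm (offs n J) k (stot n t \<sigma> J) \<le> 1"
      proof -
        have "tnorm (offs n J) k (stot n t \<sigma> J) \<le> (\<Sum>b<J. \<bar>1 / t b\<bar> * tnorm (n b) k (\<sigma> b))"
          by (rule stot_tnorm)
        also have "\<dots> \<le> (\<Sum>b<J. (1/2::real)^b / 2)" by (rule sum_mono) (rule key)
        also have "\<dots> = (\<Sum>b\<in>{0..<J}. (1/2::real)^b) / 2" by (simp add: sum_divide_distrib lessThan_atLeast0)
        also have "\<dots> \<le> 1" using geo_le[of 0 J] by simp
        finally show ?thesis .
      qed
      have wamc: "w \<in> amc_hull sc k x"
        unfolding amc_hull_def mem_Collect_eq w_def using supp tn by blast
      have "w = (\<lambda>r s. \<Sum>b<J. slice sc k (n b) (\<sigma> b) (e b) r s)"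
        unfolding w_def x_def by (rule slice_bigx) (use tpos in \<open>simp add: less_imp_neq[symmetric]\<close>)
      also have "\<dots> = (\<lambda>r s. \<Sum>b<J. z' (Suc b) r s - z' b r s)" by (simp add: \<sigma>s d_def)
      also have "\<dots> = (\<lambda>r s. z' J r s - z' 0 r s)" by (intro ext) (rule sum_lessThan_telescope[of "\<lambda>b. z' b _ _"])
      also have "\<dots> = z J" by (simp add: z'_def J_def)
      finally have weq: "w = z J" .
      have "mn k (\<lambda>i j. w i j - y i j) < eps" using weq zd'[of J] \<epsilon>J by simp
      then show "\<exists>x\<in>amc_hull sc k x. mn k (\<lambda>i j. x i j - y i j) < eps" using wamc by blast
    qed
  qed
  show ?thesis unfolding operator_compact_def using mcl xKV cover by blast
qed

end

theorem theorem6p4: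
  fixes sc :: "complex \<Rightarrow> 'v::ab_group_add \<Rightarrow> 'v"
    and mn :: "nat \<Rightarrow> (nat \<Rightarrow> nat \<Rightarrow> 'v) \<Rightarrow> real"
    and lam :: real
    and K :: "nat \<Rightarrow> (nat \<Rightarrow> nat \<Rightarrow> 'v) set"
  assumes "operator_space sc mn"
    and "subcoexact sc mn lam"
    and "matrix_set K"
    and "completely_compact sc mn K"
  shows "operator_compact sc mn K"
proof -
  interpret osp sc mn by (rule osp.intro) (rule assms(1))
  show ?thesis by (rule main_osp[OF assms(2-4)])
qed

end
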